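(* Let $k\in\{3,4,5\}$ and let $k_0$ be an integer with $2\le k_0\le k-1$. There is no finite simple $2$-connected plane graph $G$ such that every vertex of $G$ has degree $k$ except for exactly one vertex, which lies on the boundary of the outer face and has degree $k_0$, and such that all internal faces of $G$ have the same length.
   Context: A plane graph is a planar graph together with a fixed embedding in the plane; its faces are the connected regions of the complement of the drawing, the unique unbounded one being the outer face and the others internal faces. The length of a face is the total length of the closed walk(s) bounding it (a cut-edge contributes twice). *)

theory Defs
  imports Main
begin

definition simple_graph :: "'v set \<Rightarrow> 'v set set \<Rightarrow> bool" where
  "simple_graph V E \<longleftrightarrow> finite V \<and>
     (\<forall>e\<in>E. \<exists>u v. e = {u, v} \<and> u \<noteq> v \<and> u \<in> V \<and> v \<in> V)"

definition nbrs :: "'v set set \<Rightarrow> 'v \<Rightarrow> 'v set" where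
  "nbrs E v = {u. {v, u} \<in> E}"

definition degree :: "'v set set \<Rightarrow> 'v \<Rightarrow> nat" where
  "degree E v = card (nbrs E v)"

definition connected_on :: "'v set \<Rightarrow> 'v set set \<Rightarrow> bool" where
  "connected_on S E \<longleftrightarrow>
     (\<forall>x\<in>S. \<forall>y\<in>S. (x, y) \<in> ({(a, b). a \<in> S \<and> b \<in> S \<and> {a, b} \<in> E})\<^sup>*)"

definition two_connected :: "'v set \<Rightarrow> 'v set set \<Rightarrow> bool" where
  "two_connected V E \<longleftrightarrow> card V \<ge> 3 \<and> connected_on V E \<and>
     (\<forall>x\<in>V. connected_on (V - {x}) E)"

text \<open>Combinatorial embedding (rotation system): for every vertex v, rot v
  cyclically permutes the neighbours of v (clockwise order around v).\<close>
definition rotation_system :: "'v set \<Rightarrow> 'v set set \<Rightarrow> ('v \<Rightarrow> 'v \<Rightarrow> 'v) \<Rightarrow> bool" where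
  "rotation_system V E rot \<longleftrightarrow>
     (\<forall>v\<in>V. rot v ` nbrs E v = nbrs E v \<and>
        (\<forall>u\<in>nbrs E v. nbrs E v = {(rot v ^^ n) u | n. True}))"

definition darts :: "'v set set \<Rightarrow> ('v \<times> 'v) set" where
  "darts E = {(u, v). {u, v} \<in> E}"

definition face_succ :: "('v \<Rightarrow> 'v \<Rightarrow> 'v) \<Rightarrow> 'v \<times> 'v \<Rightarrow> 'v \<times> 'v" where
  "face_succ rot d = (snd d, rot (snd d) (fst d))"

text \<open>A face is an orbit of the face-tracing permutation; its length is the number
  of darts in it (the length of its boundary walk; a cut edge contributes twice).\<close>
definition face_of :: "('v \<Rightarrow> 'v \<Rightarrow> 'v) \<Rightarrow> 'v \<times> 'v \<Rightarrow> ('v \<times> 'v) set" where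
  "face_of rot d = {(face_succ rot ^^ n) d | n. True}"

definition faces :: "'v set set \<Rightarrow> ('v \<Rightarrow> 'v \<Rightarrow> 'v) \<Rightarrow> ('v \<times> 'v) set set" where
  "faces E rot = face_of rot ` darts E"

definition face_length :: "('v \<times> 'v) set \<Rightarrow> nat" where
  "face_length f = card f"

definition vertex_on_face :: "'v \<Rightarrow> ('v \<times> 'v) set \<Rightarrow> bool" where
  "vertex_on_face x f \<longleftrightarrow> (\<exists>y. (x, y) \<in> f)"

text \<open>A connected graph with a rotation system is a plane embedding iff the
  embedding has genus 0, i.e. Euler's formula V - E + F = 2 holds.\<close>
definition plane_embedding :: "'v set \<Rightarrow> 'v set set \<Rightarrow> ('v \<Rightarrow> 'v \<Rightarrow> 'v) \<Rightarrow> bool" where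
  "plane_embedding V E rot \<longleftrightarrow> rotation_system V E rot \<and>
     int (card V) - int (card E) + int (card (faces E rot)) = 2"

definition plane_graph :: "'v set \<Rightarrow> 'v set set \<Rightarrow> ('v \<Rightarrow> 'v \<Rightarrow> 'v) \<Rightarrow> ('v \<times> 'v) set \<Rightarrow> bool" where
  "plane_graph V E rot outer \<longleftrightarrow> simple_graph V E \<and> plane_embedding V E rot \<and>
     outer \<in> faces E rot"

end

theory Submission
  imports Defs Complex_Main
begin

definition orb :: "('a \<Rightarrow> 'a) \<Rightarrow> 'a \<Rightarrow> 'a set" where
  "orb f x = {(f ^^ n) x | n. True}"

definition perm_on :: "('a \<Rightarrow> 'a) \<Rightarrow> 'a set \<Rightarrow> bool" where
  "perm_on f S \<longleftrightarrow> finite S \<and> bij_betw f S S"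

definition ncyc :: "('a \<Rightarrow> 'a) \<Rightarrow> 'a set \<Rightarrow> nat" where
  "ncyc f S = card (orb f ` S)"

lemma perm_onD: "perm_on f S \<Longrightarrow> x \<in> S \<Longrightarrow> f x \<in> S"
  unfolding perm_on_def bij_betw_def by auto

lemma perm_on_inj: "perm_on f S \<Longrightarrow> x \<in> S \<Longrightarrow> y \<in> S \<Longrightarrow> f x = f y \<Longrightarrow> x = y"
  unfolding perm_on_def bij_betw_def inj_on_def by auto

lemma perm_on_surj: "perm_on f S \<Longrightarrow> y \<in> S \<Longrightarrow> \<exists>x\<in>S. f x = y"
  unfolding perm_on_def bij_betw_def by (metis image_iff)

lemma perm_onI: "finite S \<Longrightarrow> (\<And>x. x \<in> S \<Longrightarrow> f x \<in> S) \<Longrightarrow>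
   (\<And>x y. x \<in> S \<Longrightarrow> y \<in> S \<Longrightarrow> f x = f y \<Longrightarrow> x = y) \<Longrightarrow> perm_on f S"
  unfolding perm_on_def bij_betw_def
  by (metis endo_inj_surj image_subsetI inj_onI)

lemma funpow_in: "perm_on f S \<Longrightarrow> x \<in> S \<Longrightarrow> (f ^^ n) x \<in> S"
  by (induction n) (auto simp: perm_onD)

lemma funpow_inj: "perm_on f S \<Longrightarrow> x \<in> S \<Longrightarrow> y \<in> S \<Longrightarrow> (f ^^ n) x = (f ^^ n) y \<Longrightarrow> x = y"
  by (induction n) (auto dest: perm_on_inj intro: funpow_in)

lemma orb_self: "x \<in> orb f x"
  unfolding orb_def by (auto intro: exI[of _ 0])

lemma orb_funpow: "(f ^^ n) x \<in> orb f x"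
  unfolding orb_def by auto

lemma orb_step: "y \<in> orb f x \<Longrightarrow> f y \<in> orb f x"
  unfolding orb_def by clarsimp (metis funpow.simps(2) o_apply)

lemma orb_subset: "perm_on f S \<Longrightarrow> x \<in> S \<Longrightarrow> orb f x \<subseteq> S"
  unfolding orb_def by (auto intro: funpow_in)

lemma finite_orb: "perm_on f S \<Longrightarrow> x \<in> S \<Longrightarrow> finite (orb f x)"
  using orb_subset[of f S x] unfolding perm_on_def by (auto intro: finite_subset)

lemma card_orb_pos: "perm_on f S \<Longrightarrow> x \<in> S \<Longrightarrow> card (orb f x) > 0"
  using finite_orb[of f S x] orb_self[of x f] by (auto simp: card_gt_0_iff)

lemma pigeon_funpow: assumes "finite A" "\<And>i. i \<le> card A \<Longrightarrow> (f ^^ i) x \<in> A"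
  shows "\<exists>a b. a < b \<and> b \<le> card A \<and> (f ^^ a) x = (f ^^ b) x"
proof -
  have "\<not> inj_on (\<lambda>i. (f ^^ i) x) {..card A}"
  proof
    assume inj: "inj_on (\<lambda>i. (f ^^ i) x) {..card A}"
    have "card ((\<lambda>i. (f ^^ i) x) ` {..card A}) = Suc (card A)" using inj by (simp add: card_image)
    moreover have "(\<lambda>i. (f ^^ i) x) ` {..card A} \<subseteq> A" using assms(2) by auto
    then have "card ((\<lambda>i. (f ^^ i) x) ` {..card A}) \<le> card A" using assms(1) by (rule card_mono[rotated])
    ultimately show False by simp
  qed
  then obtain i j where ij: "i \<le> card A" "j \<le> card A" "i \<noteq> j" "(f ^^ i) x = (f ^^ j) x"
    unfolding inj_on_def by auto
  show ?thesis
  proof (cases "i < j")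
    case True then show ?thesis using ij by blast
  next
    case False then have "j < i" using ij(3) by simp
    then show ?thesis using ij by (intro exI[of _ j] exI[of _ i]) auto
  qed
qed

lemma funpow_shift: assumes "perm_on f S" "x \<in> S" "a < b" "(f ^^ a) x = (f ^^ b) x"
  shows "(f ^^ (b - a)) x = x"
proof -
  have "(f ^^ (a + (b - a))) x = (f ^^ a) ((f ^^ (b - a)) x)" by (simp add: funpow_add)
  then have "(f ^^ a) ((f ^^ (b - a)) x) = (f ^^ a) x" using assms(3,4) by simp
  then show ?thesis using funpow_inj[OF assms(1) funpow_in[OF assms(1,2)] assms(2)] by blast
qed

lemma funpow_return: assumes "perm_on f S" "x \<in> S" shows "\<exists>n>0. (f ^^ n) x = x"
proof -
  obtain a b where ab: "a < b" "(f ^^ a) x = (f ^^ b) x"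
    using pigeon_funpow[of S f x] assms funpow_in perm_on_def by metis
  show ?thesis using funpow_shift[OF assms ab] ab(1) by (intro exI[of _ "b - a"]) auto
qed

lemma funpow_mult_fix: "(f ^^ p) x = x \<Longrightarrow> (f ^^ (p * n)) x = x"
  by (induction n) (auto simp: funpow_add)

lemma orb_sym: assumes "perm_on f S" "x \<in> S" "y \<in> orb f x" shows "x \<in> orb f y"
proof -
  obtain n where y: "y = (f ^^ n) x" using assms(3) unfolding orb_def by auto
  obtain p where p: "p > 0" "(f ^^ p) x = x" using funpow_return[OF assms(1,2)] by auto
  have "(f ^^ (p * n)) x = x" using funpow_mult_fix[OF p(2)] .
  moreover have "n \<le> p * n" using p(1) by simp
  moreover have "(f ^^ (p * n - n)) y = (f ^^ ((p * n - n) + n)) x" using y by (simp add: funpow_add)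
  ultimately have "(f ^^ (p * n - n)) y = x" by simp
  then show ?thesis unfolding orb_def by auto
qed

lemma orb_trans: "y \<in> orb f x \<Longrightarrow> z \<in> orb f y \<Longrightarrow> z \<in> orb f x"
proof -
  assume "y \<in> orb f x" "z \<in> orb f y"
  then obtain m n where "y = (f ^^ m) x" "z = (f ^^ n) y" unfolding orb_def by auto
  then have "z = (f ^^ (n + m)) x" by (simp add: funpow_add)
  then show ?thesis unfolding orb_def by auto
qed

lemma orb_eq: assumes "perm_on f S" "x \<in> S" "y \<in> orb f x" shows "orb f y = orb f x"
proof
  show "orb f y \<subseteq> orb f x" using orb_trans[OF assms(3)] by blast
  show "orb f x \<subseteq> orb f y" using orb_trans[OF orb_sym[OF assms]] by blast
qed

lemma orb_le: assumes "(f ^^ c) x = x" "c > 0" shows "card (orb f x) \<le> c"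
proof -
  have "orb f x \<subseteq> (\<lambda>i. (f ^^ i) x) ` {..<c}"
  proof
    fix y assume "y \<in> orb f x"
    then obtain n where y: "y = (f ^^ n) x" unfolding orb_def by auto
    have "(f ^^ n) x = (f ^^ (n mod c)) ((f ^^ (c * (n div c))) x)"
      by (metis funpow_add mod_div_mult_eq mult.commute o_apply)
    also have "\<dots> = (f ^^ (n mod c)) x" using funpow_mult_fix[OF assms(1)] by simp
    finally show "y \<in> (\<lambda>i. (f ^^ i) x) ` {..<c}" using y assms(2) by auto
  qed
  then show ?thesis by (metis card_image_le card_lessThan finite_lessThan le_trans card_mono finite_imageI)
qed

lemma orb_period_min: "(f ^^ j) x = x \<Longrightarrow> j > 0 \<Longrightarrow> card (orb f x) \<le> j"
  by (rule orb_le)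

lemma orb_period: assumes "perm_on f S" "x \<in> S" shows "(f ^^ card (orb f x)) x = x"
proof -
  let ?c = "card (orb f x)"
  obtain a b where ab: "a < b" "b \<le> ?c" "(f ^^ a) x = (f ^^ b) x"
    using pigeon_funpow[of "orb f x" f x] finite_orb[OF assms] orb_funpow by metis
  have fx: "(f ^^ (b - a)) x = x" using funpow_shift[OF assms ab(1,3)] .
  then have "?c \<le> b - a" using orb_le[OF fx] ab by simp
  then have "b - a = ?c" using ab by auto
  then show ?thesis using fx by simp
qed

lemma sum_orb: assumes "perm_on f S" "A \<subseteq> S" "\<And>x. x \<in> A \<Longrightarrow> f x \<in> A"
  shows "real (card (orb f ` A)) = (\<Sum>x\<in>A. 1 / real (card (orb f x)))"
proof -
  have fin: "finite A" using assms(1,2) unfolding perm_on_def by (blast intro: finite_subset)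
  have inA: "orb f x \<subseteq> A" if "x \<in> A" for x
  proof
    fix y assume "y \<in> orb f x"
    then obtain n where n: "y = (f ^^ n) x" unfolding orb_def by auto
    have "(f ^^ m) x \<in> A" for m using that assms(3) by (induction m) auto
    then show "y \<in> A" using n by simp
  qed
  have "(\<Sum>x\<in>A. 1 / real (card (orb f x))) =
     (\<Sum>Q\<in>orb f ` A. \<Sum>x\<in>{x\<in>A. orb f x = Q}. 1 / real (card (orb f x)))"
    by (rule sum.image_gen[OF fin])
  also have "\<dots> = (\<Sum>Q\<in>orb f ` A. 1)"
  proof (rule sum.cong[OF refl])
    fix Q assume "Q \<in> orb f ` A"
    then obtain x where x: "x \<in> A" "Q = orb f x" by auto
    have eq: "y \<in> A \<and> orb f y = Q \<longleftrightarrow> y \<in> Q" for y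
    proof
      assume "y \<in> A \<and> orb f y = Q" then show "y \<in> Q" using orb_self[of y f] by simp
    next
      assume y: "y \<in> Q"
      have "y \<in> A" using y x inA by blast
      moreover have "orb f y = Q" using orb_eq[OF assms(1), of x y] x y assms(2) by blast
      ultimately show "y \<in> A \<and> orb f y = Q" by simp
    qed
    have "{y\<in>A. orb f y = Q} = Q" using eq by blast
    then have "(\<Sum>y\<in>{y\<in>A. orb f y = Q}. 1 / real (card (orb f y))) = (\<Sum>y\<in>Q. 1 / real (card (orb f y)))"
      by simp
    also have "\<dots> = (\<Sum>y\<in>Q. 1 / real (card Q))"
      by (rule sum.cong[OF refl]) (metis eq)
    also have "\<dots> = 1" using card_orb_pos[OF assms(1), of x] x assms(2) by auto
    finally show "(\<Sum>y\<in>{y\<in>A. orb f y = Q}. 1 / real (card (orb f y))) = 1" .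
  qed
  also have "\<dots> = real (card (orb f ` A))" by simp
  finally show ?thesis by simp
qed

lemma funpow_cong_on: assumes "perm_on f S" "\<forall>y\<in>S. f y = g y" "x \<in> S"
  shows "(f ^^ n) x = (g ^^ n) x"
proof (induction n)
  case (Suc n)
  have "(f ^^ n) x \<in> S" using funpow_in[OF assms(1,3)] .
  then show ?case using Suc assms(2) by simp
qed simp

lemma orb_cong: "perm_on f S \<Longrightarrow> \<forall>y\<in>S. f y = g y \<Longrightarrow> x \<in> S \<Longrightarrow> orb f x = orb g x"
  unfolding orb_def using funpow_cong_on by metis

lemma perm_on_cong: "perm_on f S \<Longrightarrow> \<forall>y\<in>S. f y = g y \<Longrightarrow> perm_on g S"
  unfolding perm_on_def by (metis bij_betw_cong)

lemma ncyc_cong: assumes "perm_on f S" "\<forall>y\<in>S. f y = g y" shows "ncyc f S = ncyc g S"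
proof -
  have "orb f ` S = orb g ` S" using orb_cong[OF assms] by (intro image_cong) auto
  then show ?thesis unfolding ncyc_def by simp
qed

lemma orb_fix: "f x = x \<Longrightarrow> orb f x = {x}"
proof -
  assume a: "f x = x"
  have "(f ^^ n) x = x" for n by (induction n) (auto simp: a)
  then show ?thesis unfolding orb_def by auto
qed

definition bypass :: "('a \<Rightarrow> 'a) \<Rightarrow> 'a \<Rightarrow> 'a \<Rightarrow> 'a" where
  "bypass f x = (\<lambda>y. if f y = x then f x else f y)"

lemma bypass_perm: assumes "perm_on f S" "x \<in> S" shows "perm_on (bypass f x) (S - {x})"
proof (rule perm_onI)
  show "finite (S - {x})" using assms unfolding perm_on_def by simp
next
  fix y assume y: "y \<in> S - {x}"
  show "bypass f x y \<in> S - {x}"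
  proof (cases "f y = x")
    case True
    then have "f x \<noteq> x" using y perm_on_inj[OF assms(1), of y x] assms(2) by auto
    then show ?thesis using True perm_onD[OF assms] unfolding bypass_def by simp
  next
    case False
    then show ?thesis using perm_onD[OF assms(1)] y unfolding bypass_def by simp
  qed
next
  fix y z assume y: "y \<in> S - {x}" and z: "z \<in> S - {x}" and e: "bypass f x y = bypass f x z"
  show "y = z"
  proof (cases "f y = x"; cases "f z = x")
    assume "f y = x" "f z = x" then show ?thesis using y z perm_on_inj[OF assms(1)] by auto
  next
    assume "f y = x" "f z \<noteq> x" then have "f x = f z" using e unfolding bypass_def by simp
    then have "x = z" using perm_on_inj[OF assms(1)] assms(2) z by auto
    then show ?thesis using z by simp
  next
    assume "f y \<noteq> x" "f z = x" then have "f x = f y" using e unfolding bypass_def by simp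
    then have "x = y" using perm_on_inj[OF assms(1)] assms(2) y by auto
    then show ?thesis using y by simp
  next
    assume "f y \<noteq> x" "f z \<noteq> x" then have "f y = f z" using e unfolding bypass_def by simp
    then show ?thesis using perm_on_inj[OF assms(1)] y z by auto
  qed
qed

lemma orb_bypass: assumes "perm_on f S" "x \<in> S" "y \<in> S" "y \<noteq> x"
  shows "orb (bypass f x) y = orb f y - {x}"
proof
  have P: "perm_on (bypass f x) (S - {x})" by (rule bypass_perm[OF assms(1,2)])
  show "orb (bypass f x) y \<subseteq> orb f y - {x}"
  proof
    fix z assume "z \<in> orb (bypass f x) y"
    then obtain n where n: "z = (bypass f x ^^ n) y" unfolding orb_def by auto
    have "(bypass f x ^^ n) y \<in> orb f y" 
    proof (induction n)
      case 0 then show ?case by (simp add: orb_self)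
    next
      case (Suc n)
      let ?u = "(bypass f x ^^ n) y"
      have "f ?u \<in> orb f y" by (rule orb_step[OF Suc])
      then have "f (f ?u) \<in> orb f y" by (rule orb_step)
      have e: "(bypass f x ^^ Suc n) y = (if f ?u = x then f (f ?u) else f ?u)"
        by (simp add: bypass_def)
      show ?case using \<open>f ?u \<in> orb f y\<close> \<open>f (f ?u) \<in> orb f y\<close> unfolding e by (cases "f ?u = x") auto
    qed
    moreover have "(bypass f x ^^ n) y \<in> S - {x}" using funpow_in[OF P] assms(3,4) by simp
    ultimately show "z \<in> orb f y - {x}" using n by simp
  qed
next
  have key: "(f ^^ n) y \<noteq> x \<longrightarrow> (f ^^ n) y \<in> orb (bypass f x) y" for n
  proof (induction n rule: less_induct)
    case (less n)
    show ?case
    proof (cases n)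
      case 0 then show ?thesis by (simp add: orb_self)
    next
      case (Suc m)
      show ?thesis
      proof
        assume ne: "(f ^^ n) y \<noteq> x"
        show "(f ^^ n) y \<in> orb (bypass f x) y"
        proof (cases "(f ^^ m) y = x")
          case False
          then have "(f ^^ m) y \<in> orb (bypass f x) y" using less Suc by simp
          then have "bypass f x ((f ^^ m) y) \<in> orb (bypass f x) y" by (rule orb_step)
          moreover have "bypass f x ((f ^^ m) y) = (f ^^ n) y" using ne Suc unfolding bypass_def by simp
          ultimately show ?thesis by simp
        next
          case True
          then have "m \<noteq> 0" using assms(4) by (cases m) auto
          then obtain j where j: "m = Suc j" by (cases m) auto
          have "(f ^^ j) y \<noteq> x"
          proof
            assume "(f ^^ j) y = x"
            then have "f x = x" using True j by simp
            then show False using ne Suc True by simp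
          qed
          then have "(f ^^ j) y \<in> orb (bypass f x) y" using less Suc j by simp
          then have "bypass f x ((f ^^ j) y) \<in> orb (bypass f x) y" by (rule orb_step)
          moreover have "bypass f x ((f ^^ j) y) = (f ^^ n) y"
            using True Suc j unfolding bypass_def by simp
          ultimately show ?thesis by simp
        qed
      qed
    qed
  qed
  show "orb f y - {x} \<subseteq> orb (bypass f x) y"
  proof
    fix z assume "z \<in> orb f y - {x}"
    then obtain n where "z = (f ^^ n) y" "z \<noteq> x" unfolding orb_def by auto
    then show "z \<in> orb (bypass f x) y" using key by blast
  qed
qed

lemma ncyc_bypass: assumes "perm_on f S" "x \<in> S"
  shows "ncyc f S = ncyc (bypass f x) (S - {x}) + (if f x = x then 1 else 0)"
proof -
  have fin: "finite S" using assms unfolding perm_on_def by simp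
  have "orb (bypass f x) ` (S - {x}) = (\<lambda>y. orb f y - {x}) ` (S - {x})"
    by (rule image_cong[OF refl]) (rule orb_bypass[OF assms]; simp)
  also have "\<dots> = (\<lambda>Q. Q - {x}) ` (orb f ` (S - {x}))" by (simp add: image_image)
  finally have "orb (bypass f x) ` (S - {x}) = (\<lambda>Q. Q - {x}) ` (orb f ` (S - {x}))" .
  moreover have "inj_on (\<lambda>Q. Q - {x}) (orb f ` (S - {x}))"
  proof (rule inj_onI)
    fix Q1 Q2 assume q1: "Q1 \<in> orb f ` (S - {x})" and q2: "Q2 \<in> orb f ` (S - {x})"
      and e: "Q1 - {x} = Q2 - {x}"
    obtain y1 where y1: "y1 \<in> S - {x}" "Q1 = orb f y1" using q1 by auto
    obtain y2 where y2: "y2 \<in> S - {x}" "Q2 = orb f y2" using q2 by auto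
    have "y1 \<in> Q1 - {x}" using y1 orb_self by fastforce
    then have "y1 \<in> orb f y2" using e y2 by auto
    then have "orb f y1 = orb f y2" using orb_eq[OF assms(1)] y2 by blast
    then show "Q1 = Q2" using y1 y2 by simp
  qed
  ultimately have c1: "ncyc (bypass f x) (S - {x}) = card (orb f ` (S - {x}))"
    unfolding ncyc_def by (simp add: card_image)
  have ins: "orb f ` S = insert (orb f x) (orb f ` (S - {x}))" using assms(2) by blast
  show ?thesis
  proof (cases "f x = x")
    case True
    have "orb f x \<notin> orb f ` (S - {x})"
    proof
      assume "orb f x \<in> orb f ` (S - {x})"
      then obtain y where "y \<in> S - {x}" "orb f x = orb f y" by auto
      then show False using orb_fix[of f x, OF True] orb_self[of y f] by auto
    qed
    then show ?thesis using True c1 ins fin unfolding ncyc_def by simp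
  next
    case False
    have "f x \<in> S - {x}" using False perm_onD[OF assms] by simp
    moreover have "orb f (f x) = orb f x" by (rule orb_eq[OF assms orb_step[OF orb_self]])
    ultimately have "orb f x \<in> orb f ` (S - {x})" by (metis imageI)
    then have "orb f ` S = orb f ` (S - {x})" using ins by blast
    then show ?thesis using False c1 unfolding ncyc_def by simp
  qed
qed

definition tr :: "'a \<Rightarrow> 'a \<Rightarrow> 'a \<Rightarrow> 'a" where
  "tr a b = (\<lambda>y. if y = a then b else if y = b then a else y)"

lemma perm_on_comp_tr: assumes "perm_on f S" "a \<in> S" "b \<in> S" shows "perm_on (f \<circ> tr a b) S"
proof (rule perm_onI)
  show "finite S" using assms unfolding perm_on_def by simp
  fix x assume "x \<in> S" then show "(f \<circ> tr a b) x \<in> S" using assms perm_onD[OF assms(1)] unfolding tr_def by auto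
next
  fix x y assume "x \<in> S" "y \<in> S" "(f \<circ> tr a b) x = (f \<circ> tr a b) y"
  then have "tr a b x = tr a b y" using perm_on_inj[OF assms(1)] assms unfolding tr_def
    by (auto split: if_splits)
  then show "x = y" unfolding tr_def by (auto split: if_splits)
qed

lemma perm_on_comp: assumes "perm_on f S" "perm_on g S" shows "perm_on (f \<circ> g) S"
  using assms unfolding perm_on_def using bij_betw_trans by blast

lemma ncyc_tr_aux:
  assumes "card S = n" "perm_on f S" "a \<in> S" "b \<in> S" "a \<noteq> b"
  shows "(b \<in> orb f a \<longrightarrow> ncyc (f \<circ> tr a b) S = ncyc f S + 1) \<and>
         (b \<notin> orb f a \<longrightarrow> ncyc (f \<circ> tr a b) S + 1 = ncyc f S)"
  using assms
proof (induction n arbitrary: S f a b rule: less_induct)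
  case (less n)
  note pf = less.prems(2)
  define g where "g = f \<circ> tr a b"
  have pg: "perm_on g S" unfolding g_def by (rule perm_on_comp_tr[OF pf less.prems(3,4)])
  have ga: "g a = f b" and gb: "g b = f a" and go: "\<And>y. y \<noteq> a \<Longrightarrow> y \<noteq> b \<Longrightarrow> g y = f y"
    unfolding g_def tr_def using less.prems(5) by auto
  have fa_ne_fb: "f a \<noteq> f b" using perm_on_inj[OF pf less.prems(3,4)] less.prems(5) by blast
  show ?case
  proof (cases "f b = b")
    case True
    have nb: "b \<notin> orb f a"
    proof
      assume "b \<in> orb f a"
      then have "a \<in> orb f b" by (rule orb_sym[OF pf less.prems(3)])
      then show False using orb_fix[of f b, OF True] less.prems(5) by simp
    qed
    have gb_ne: "g b \<noteq> b" using gb True fa_ne_fb by simp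
    have agree: "\<forall>y\<in>S - {b}. bypass g b y = bypass f b y"
    proof
      fix y assume y: "y \<in> S - {b}"
      show "bypass g b y = bypass f b y"
      proof (cases "y = a")
        case True
        then show ?thesis using ga gb \<open>f b = b\<close> fa_ne_fb unfolding bypass_def by auto
      next
        case False
        have "f y \<noteq> b" using perm_on_inj[OF pf, of y b] y \<open>f b = b\<close> less.prems(4) by auto
        then show ?thesis using go[OF False] y unfolding bypass_def by auto
      qed
    qed
    have "ncyc g S = ncyc (bypass g b) (S - {b})"
      using ncyc_bypass[OF pg less.prems(4)] gb_ne by simp
    also have "\<dots> = ncyc (bypass f b) (S - {b})"
      by (rule ncyc_cong[OF bypass_perm[OF pg less.prems(4)] agree])
    finally have "ncyc g S + 1 = ncyc f S"
      using ncyc_bypass[OF pf less.prems(4)] True by simp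
    then show ?thesis using nb by (simp add: g_def[symmetric])
  next
    case False
    obtain y0 where y0: "y0 \<in> S" "f y0 = b" using perm_on_surj[OF pf less.prems(4)] by blast
    have y0b: "y0 \<noteq> b" using y0 False by auto
    show ?thesis
    proof (cases "y0 = a")
      case True
      have fab: "f a = b" using y0 True by simp
      have inb: "b \<in> orb f a" using orb_step[OF orb_self[of a f]] fab by simp
      have gbb: "g b = b" using gb fab by simp
      have agree: "\<forall>y\<in>S - {b}. bypass g b y = bypass f b y"
      proof
        fix y assume y: "y \<in> S - {b}"
        have gy: "g y \<noteq> b" using perm_on_inj[OF pg, of y b] y gbb less.prems(4) by auto
        show "bypass g b y = bypass f b y"
        proof (cases "y = a")
          case True
          then show ?thesis using gy ga fab unfolding bypass_def by auto
        next
          case False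
          have "f y \<noteq> b" using perm_on_inj[OF pf, of y a] y fab less.prems(3) False by auto
          then show ?thesis using go[OF False] y gy unfolding bypass_def by auto
        qed
      qed
      have "ncyc g S = ncyc (bypass g b) (S - {b}) + 1"
        using ncyc_bypass[OF pg less.prems(4)] gbb by simp
      also have "ncyc (bypass g b) (S - {b}) = ncyc (bypass f b) (S - {b})"
        by (rule ncyc_cong[OF bypass_perm[OF pg less.prems(4)] agree])
      finally have "ncyc g S = ncyc f S + 1"
        using ncyc_bypass[OF pf less.prems(4)] False by simp
      then show ?thesis using inb by (simp add: g_def[symmetric])
    next
      case False
      note y0a = False
      define f' where "f' = bypass f b"
      define S' where "S' = S - {b}"
      have pf': "perm_on f' S'" unfolding f'_def S'_def by (rule bypass_perm[OF pf less.prems(4)])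
      have gb_ne: "g b \<noteq> b" using gb y0 y0a perm_on_inj[OF pf less.prems(3) y0(1)] by auto
      have agree: "\<forall>y\<in>S'. bypass g b y = (f' \<circ> tr a y0) y"
      proof
        fix y assume y: "y \<in> S'"
        show "bypass g b y = (f' \<circ> tr a y0) y"
        proof (cases "y = a")
          case True
          have "g a \<noteq> b" using ga False \<open>f b \<noteq> b\<close> by simp
          then show ?thesis using True ga y0 unfolding bypass_def f'_def tr_def by auto
        next
          case ya: False
          show ?thesis
          proof (cases "y = y0")
            case True
            have "g y0 = b" using go[OF y0a y0b] y0 by simp
            moreover have "f a \<noteq> b" using y0 y0a perm_on_inj[OF pf less.prems(3) y0(1)] by auto
            ultimately show ?thesis using True gb ya y0a unfolding bypass_def f'_def tr_def by auto
          next
            case False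
            have yb: "y \<noteq> b" using y unfolding S'_def by simp
            have "f y \<noteq> b" using perm_on_inj[OF pf, of y y0] y y0 False unfolding S'_def by auto
            then show ?thesis using go[OF ya yb] ya False unfolding bypass_def f'_def tr_def by auto
          qed
        qed
      qed
      have finS: "finite S" using pf unfolding perm_on_def by simp
      have cardS': "card S' < n" using less.prems(1) card_Diff1_less[OF finS less.prems(4)]
        unfolding S'_def by simp
      have aS': "a \<in> S'" and y0S': "y0 \<in> S'" using less.prems(3,5) y0 y0b unfolding S'_def by auto
      have IH: "(y0 \<in> orb f' a \<longrightarrow> ncyc (f' \<circ> tr a y0) S' = ncyc f' S' + 1) \<and>
         (y0 \<notin> orb f' a \<longrightarrow> ncyc (f' \<circ> tr a y0) S' + 1 = ncyc f' S')"
        using less.IH[OF cardS' refl pf' aS' y0S'] y0a by (simp add: comp_def)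
      have orbeq: "orb f' a = orb f a - {b}" unfolding f'_def
        by (rule orb_bypass[OF pf less.prems(4,3)]) (use less.prems(5) in simp)
      have iff: "y0 \<in> orb f' a \<longleftrightarrow> b \<in> orb f a"
      proof
        assume "y0 \<in> orb f' a"
        then have "y0 \<in> orb f a" using orbeq by simp
        then have "f y0 \<in> orb f a" by (rule orb_step)
        then show "b \<in> orb f a" using y0 by simp
      next
        assume b: "b \<in> orb f a"
        have "b \<in> orb f y0" using orb_step[OF orb_self[of y0 f]] y0 by simp
        then have "y0 \<in> orb f b" by (rule orb_sym[OF pf y0(1)])
        moreover have "orb f b = orb f a" by (rule orb_eq[OF pf less.prems(3) b])
        ultimately show "y0 \<in> orb f' a" using orbeq y0b by simp
      qed
      have e1: "ncyc g S = ncyc (f' \<circ> tr a y0) S'"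
      proof -
        have "ncyc g S = ncyc (bypass g b) S'"
          using ncyc_bypass[OF pg less.prems(4)] gb_ne unfolding S'_def by simp
        also have "\<dots> = ncyc (f' \<circ> tr a y0) S'"
          using ncyc_cong[OF bypass_perm[OF pg less.prems(4)] agree[unfolded S'_def]]
          unfolding S'_def .
        finally show ?thesis .
      qed
      have e2: "ncyc f S = ncyc f' S'"
        using ncyc_bypass[OF pf less.prems(4)] \<open>f b \<noteq> b\<close> unfolding f'_def S'_def by simp
      show ?thesis using IH iff e1 e2 by (simp add: g_def[symmetric])
    qed
  qed
qed

lemma ncyc_tr:
  assumes "perm_on f S" "a \<in> S" "b \<in> S" "a \<noteq> b"
  shows "b \<in> orb f a \<Longrightarrow> ncyc (f \<circ> tr a b) S = ncyc f S + 1"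
    and "b \<notin> orb f a \<Longrightarrow> ncyc (f \<circ> tr a b) S + 1 = ncyc f S"
  using ncyc_tr_aux[OF refl assms] by auto

definition conn :: "('a \<Rightarrow> 'a) \<Rightarrow> ('a \<Rightarrow> 'a) \<Rightarrow> 'a set \<Rightarrow> ('a \<times> 'a) set" where
  "conn al be S = ({(x, y). x \<in> S \<and> (y = al x \<or> y = be x)})\<^sup>*"

definition ncomp :: "('a \<Rightarrow> 'a) \<Rightarrow> ('a \<Rightarrow> 'a) \<Rightarrow> 'a set \<Rightarrow> nat" where
  "ncomp al be S = card ((\<lambda>x. conn al be S `` {x}) ` S)"

lemma conn_edge1: "x \<in> S \<Longrightarrow> (x, al x) \<in> conn al be S"
  unfolding conn_def by (rule r_into_rtrancl) simp

lemma conn_edge2: "x \<in> S \<Longrightarrow> (x, be x) \<in> conn al be S"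
  unfolding conn_def by (rule r_into_rtrancl) simp

lemma conn_trans: "(x, y) \<in> conn al be S \<Longrightarrow> (y, z) \<in> conn al be S \<Longrightarrow> (x, z) \<in> conn al be S"
  unfolding conn_def by (rule rtrancl_trans)

lemma conn_refl: "(x, x) \<in> conn al be S"
  unfolding conn_def by simp

lemma conn_in: assumes "perm_on al S" "perm_on be S" "(x, y) \<in> conn al be S" "x \<in> S" shows "y \<in> S"
  using assms(3,4) unfolding conn_def
proof (induction rule: rtrancl_induct)
  case (step y z) then show ?case using perm_onD[OF assms(1)] perm_onD[OF assms(2)] by auto
qed simp

lemma conn_pow1: assumes "perm_on al S" "x \<in> S" shows "(x, (al ^^ n) x) \<in> conn al be S"
proof (induction n)
  case 0 then show ?case by (simp add: conn_refl)
next
  case (Suc n)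
  have "(al ^^ n) x \<in> S" by (rule funpow_in[OF assms])
  then show ?case using conn_trans[OF Suc conn_edge1] by simp
qed

lemma conn_pow2: assumes "perm_on be S" "x \<in> S" shows "(x, (be ^^ n) x) \<in> conn al be S"
proof (induction n)
  case 0 then show ?case by (simp add: conn_refl)
next
  case (Suc n)
  have "(be ^^ n) x \<in> S" by (rule funpow_in[OF assms])
  then show ?case using conn_trans[OF Suc conn_edge2] by simp
qed

lemma conn_orb1: "perm_on al S \<Longrightarrow> x \<in> S \<Longrightarrow> y \<in> orb al x \<Longrightarrow> (x, y) \<in> conn al be S"
  unfolding orb_def using conn_pow1 by fastforce

lemma conn_orb2: "perm_on be S \<Longrightarrow> x \<in> S \<Longrightarrow> y \<in> orb be x \<Longrightarrow> (x, y) \<in> conn al be S"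
  unfolding orb_def using conn_pow2 by fastforce

lemma conn_sym: assumes "perm_on al S" "perm_on be S" "(x, y) \<in> conn al be S" "x \<in> S"
  shows "(y, x) \<in> conn al be S"
  using assms(3,4) unfolding conn_def
proof (induction rule: rtrancl_induct)
  case base then show ?case by simp
next
  case (step y z)
  have yS: "y \<in> S" and z: "z = al y \<or> z = be y" using step(2) by auto
  have "(z, y) \<in> conn al be S"
  proof (cases "z = al y")
    case True
    have "z \<in> S" using True perm_onD[OF assms(1) yS] by simp
    moreover have "y \<in> orb al z" using orb_sym[OF assms(1) yS] orb_step[OF orb_self[of y al]] True by simp
    ultimately show ?thesis using conn_orb1[OF assms(1)] by blast
  next
    case False
    then have z2: "z = be y" using z by simp
    have "z \<in> S" using z2 perm_onD[OF assms(2) yS] by simp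
    moreover have "y \<in> orb be z" using orb_sym[OF assms(2) yS] orb_step[OF orb_self[of y be]] z2 by simp
    ultimately show ?thesis using conn_orb2[OF assms(2)] by blast
  qed
  then show ?case using step(3,4) unfolding conn_def by (meson rtrancl_trans)
qed

lemma conn_class: assumes "perm_on al S" "perm_on be S" "(x, y) \<in> conn al be S" "x \<in> S"
  shows "conn al be S `` {x} = conn al be S `` {y}"
proof -
  have "(y, x) \<in> conn al be S" by (rule conn_sym[OF assms])
  then show ?thesis using assms(3) conn_trans[of _ _ al be S] by blast
qed

lemma orb_comp_conn: assumes "perm_on al S" "perm_on be S" "x \<in> S" "y \<in> orb (al \<circ> be) x"
  shows "(x, y) \<in> conn al be S"
proof -
  obtain n where y: "y = ((al \<circ> be) ^^ n) x" using assms(4) unfolding orb_def by auto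
  have pab: "perm_on (al \<circ> be) S" by (rule perm_on_comp[OF assms(1,2)])
  have "(x, ((al \<circ> be) ^^ n) x) \<in> conn al be S" for n
  proof (induction n)
    case 0 then show ?case by (simp add: conn_refl)
  next
    case (Suc n)
    let ?u = "((al \<circ> be) ^^ n) x"
    have u: "?u \<in> S" by (rule funpow_in[OF pab assms(3)])
    have "(?u, be ?u) \<in> conn al be S" by (rule conn_edge2[OF u])
    moreover have "(be ?u, al (be ?u)) \<in> conn al be S" by (rule conn_edge1[OF perm_onD[OF assms(2) u]])
    ultimately have "(x, al (be ?u)) \<in> conn al be S" using Suc conn_trans by metis
    moreover have eq: "((al \<circ> be) ^^ Suc n) x = al (be ?u)" by simp
    ultimately show ?case by metis
  qed
  then show ?thesis using y by simp
qed

lemma card_image_factor: assumes "finite A" "\<forall>x\<in>A. \<forall>y\<in>A. h x = h y \<longrightarrow> g x = g y"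
  shows "card (g ` A) \<le> card (h ` A)"
proof -
  have "g ` A = (\<lambda>c. g (inv_into A h c)) ` (h ` A)"
  proof -
    have "g x = g (inv_into A h (h x))" if "x \<in> A" for x
    proof -
      have "inv_into A h (h x) \<in> A" using that by (simp add: inv_into_into)
      moreover have "h (inv_into A h (h x)) = h x" using that by (simp add: f_inv_into_f)
      ultimately show ?thesis using assms(2) that by metis
    qed
    then show ?thesis by (auto simp: image_image intro!: image_cong)
  qed
  then show ?thesis using card_image_le assms(1) by (metis finite_imageI)
qed

lemma ncomp_fix: assumes "perm_on al S" "perm_on be S" "\<forall>x\<in>S. be x = x"
  shows "ncomp al be S = ncyc al S"
proof -
  have "conn al be S `` {x} = orb al x" if xS: "x \<in> S" for x
  proof
    show "orb al x \<subseteq> conn al be S `` {x}" using conn_orb1[OF assms(1) xS] by blast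
    show "conn al be S `` {x} \<subseteq> orb al x"
    proof
      fix y assume "y \<in> conn al be S `` {x}"
      then have "(x, y) \<in> conn al be S" by simp
      then show "y \<in> orb al x" unfolding conn_def
      proof (induction rule: rtrancl_induct)
        case base then show ?case by (rule orb_self)
      next
        case (step y z)
        then have "y \<in> S" "z = al y \<or> z = be y" by auto
        then show ?case using step(3) orb_step[OF step(3)] assms(3) by auto
      qed
    qed
  qed
  then show ?thesis unfolding ncomp_def ncyc_def by (metis (no_types, lifting) image_cong)
qed

lemma ncyc_id: assumes "perm_on be S" "\<forall>x\<in>S. be x = x" shows "ncyc be S = card S"
proof -
  have "orb be ` S = (\<lambda>x. {x}) ` S"
  proof (rule image_cong[OF refl])
    fix x assume "x \<in> S" then show "orb be x = {x}" using assms(2) by (intro orb_fix) simp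
  qed
  moreover have "inj_on (\<lambda>x. {x}) S" by (auto intro: inj_onI)
  ultimately show ?thesis unfolding ncyc_def by (simp add: card_image)
qed

lemma conn_mono: assumes "\<And>x. x \<in> S \<Longrightarrow> (x, al x) \<in> conn al' be' S \<and> (x, be x) \<in> conn al' be' S"
  shows "conn al be S \<subseteq> conn al' be' S"
  unfolding conn_def[of al be S]
proof (rule rtrancl_subset_rtrancl[of _ "{(x, y). x \<in> S \<and> (y = al' x \<or> y = be' x)}", folded conn_def])
  show "{(x, y). x \<in> S \<and> (y = al x \<or> y = be x)} \<subseteq> conn al' be' S" using assms by auto
qed

lemma genus_aux:
  assumes "card {x\<in>S. be x \<noteq> x} = m" "perm_on al S" "perm_on be S"
  shows "ncyc al S + ncyc be S + ncyc (al \<circ> be) S \<le> card S + 2 * ncomp al be S"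
  using assms
proof (induction m arbitrary: be rule: less_induct)
  case (less m)
  note pa = less.prems(2) and pb = less.prems(3)
  have finS: "finite S" using pa unfolding perm_on_def by simp
  show ?case
  proof (cases "\<exists>a\<in>S. be a \<noteq> a")
    case False
    then have fx: "\<forall>x\<in>S. be x = x" by simp
    have "ncyc (al \<circ> be) S = ncyc al S"
      using ncyc_cong[OF pa, of "al \<circ> be"] fx by simp
    then show ?thesis using ncomp_fix[OF pa pb fx] ncyc_id[OF pb fx] by linarith
  next
    case True
    then obtain a where aS: "a \<in> S" and ba: "be a \<noteq> a" by blast
    define b where "b = be a"
    have bS: "b \<in> S" unfolding b_def by (rule perm_onD[OF pb aS])
    have ab: "a \<noteq> b" using ba unfolding b_def by simp
    have bb: "be b \<noteq> b" using perm_on_inj[OF pb aS bS] ab unfolding b_def by auto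
    define be' where "be' = be \<circ> tr a b"
    have pb': "perm_on be' S" unfolding be'_def by (rule perm_on_comp_tr[OF pb aS bS])
    have be'a: "be' a = be b" and be'b: "be' b = b" and be'o: "\<And>x. x \<noteq> a \<Longrightarrow> x \<noteq> b \<Longrightarrow> be' x = be x"
      unfolding be'_def tr_def b_def using ab b_def by auto
    have sub: "{x\<in>S. be' x \<noteq> x} \<subset> {x\<in>S. be x \<noteq> x}"
    proof
      show "{x\<in>S. be' x \<noteq> x} \<subseteq> {x\<in>S. be x \<noteq> x}"
      proof
        fix x assume x: "x \<in> {x\<in>S. be' x \<noteq> x}"
        show "x \<in> {x\<in>S. be x \<noteq> x}"
        proof (cases "x = a")
          case True then show ?thesis using x ba by simp
        next
          case False then show ?thesis using x be'b be'o by (cases "x = b") auto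
        qed
      qed
      show "{x\<in>S. be' x \<noteq> x} \<noteq> {x\<in>S. be x \<noteq> x}" using bS bb be'b by blast
    qed
    have lt: "card {x\<in>S. be' x \<noteq> x} < m"
      using psubset_card_mono[OF _ sub] finS less.prems(1) by simp
    have IH: "ncyc al S + ncyc be' S + ncyc (al \<circ> be') S \<le> card S + 2 * ncomp al be' S"
      by (rule less.IH[OF lt refl pa pb'])
    have binorb: "b \<in> orb be a" unfolding b_def by (rule orb_step[OF orb_self])
    have cb': "ncyc be' S = ncyc be S + 1" unfolding be'_def by (rule ncyc_tr(1)[OF pb aS bS ab binorb])
    have pab': "perm_on (al \<circ> be') S" by (rule perm_on_comp[OF pa pb'])
    have pab: "perm_on (al \<circ> be) S" by (rule perm_on_comp[OF pa pb])
    have agree: "\<forall>y\<in>S. (al \<circ> be) y = ((al \<circ> be') \<circ> tr a b) y"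
      unfolding be'_def tr_def by auto
    have cab: "ncyc (al \<circ> be) S = ncyc ((al \<circ> be') \<circ> tr a b) S" by (rule ncyc_cong[OF pab agree])
    show ?thesis
    proof (cases "(a, b) \<in> conn al be' S")
      case True
      have "conn al be S = conn al be' S"
      proof
        show "conn al be S \<subseteq> conn al be' S"
        proof (rule conn_mono, rule conjI)
          fix x assume xS: "x \<in> S"
          show "(x, al x) \<in> conn al be' S" by (rule conn_edge1[OF xS])
          show "(x, be x) \<in> conn al be' S"
          proof (cases "x = a")
            case True then show ?thesis using \<open>(a, b) \<in> conn al be' S\<close> b_def by simp
          next
            case xa: False
            show ?thesis
            proof (cases "x = b")
              case True
              have "(b, a) \<in> conn al be' S" by (rule conn_sym[OF pa pb' \<open>(a, b) \<in> conn al be' S\<close> aS])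
              moreover have "(a, be' a) \<in> conn al be' S" by (rule conn_edge2[OF aS])
              ultimately show ?thesis using True be'a conn_trans by metis
            next
              case False then show ?thesis using conn_edge2[OF xS, where al=al and be=be'] be'o xa by simp
            qed
          qed
        qed
        show "conn al be' S \<subseteq> conn al be S"
        proof (rule conn_mono, rule conjI)
          fix x assume xS: "x \<in> S"
          show "(x, al x) \<in> conn al be S" by (rule conn_edge1[OF xS])
          show "(x, be' x) \<in> conn al be S"
          proof (cases "x = a")
            case True
            have "(a, b) \<in> conn al be S" using conn_edge2[OF aS] b_def by simp
            moreover have "(b, be b) \<in> conn al be S" by (rule conn_edge2[OF bS])
            ultimately show ?thesis using True be'a conn_trans by metis
          next
            case xa: False
            show ?thesis
            proof (cases "x = b")
              case True then show ?thesis using be'b conn_refl by metis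
            next
              case False then show ?thesis using conn_edge2[OF xS, where al=al and be=be] be'o xa by simp
            qed
          qed
        qed
      qed
      then have "ncomp al be S = ncomp al be' S" unfolding ncomp_def by simp
      moreover have "ncyc (al \<circ> be) S \<le> ncyc (al \<circ> be') S + 1"
      proof (cases "b \<in> orb (al \<circ> be') a")
        case True then show ?thesis using ncyc_tr(1)[OF pab' aS bS ab] cab by simp
      next
        case False then show ?thesis using ncyc_tr(2)[OF pab' aS bS ab] cab by simp
      qed
      ultimately show ?thesis using IH cb' by linarith
    next
      case False
      note nab = False
      have "b \<notin> orb (al \<circ> be') a" using orb_comp_conn[OF pa pb' aS] False by blast
      then have c2: "ncyc (al \<circ> be) S + 1 = ncyc (al \<circ> be') S"
        using ncyc_tr(2)[OF pab' aS bS ab] cab by simp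
      let ?c = "conn al be S" and ?c' = "conn al be' S"
      have charac: "(x, y) \<in> ?c' \<or> ((x, a) \<in> ?c' \<and> (b, y) \<in> ?c') \<or> ((x, b) \<in> ?c' \<and> (a, y) \<in> ?c')"
        if "(x, y) \<in> ?c" for x y
        using that unfolding conn_def[of al be S]
      proof (induction rule: rtrancl_induct)
        case base then show ?case using conn_refl by metis
      next
        case (step y z)
        have yS: "y \<in> S" and z: "z = al y \<or> z = be y" using step(2) by auto
        have yz: "(y, z) \<in> ?c' \<or> (y = a \<and> z = b) \<or> (y = b \<and> (a, z) \<in> ?c')"
        proof (cases "z = al y")
          case True then show ?thesis using conn_edge1[OF yS] by simp
        next
          case False
          then have zb: "z = be y" using z by simp
          show ?thesis
          proof (cases "y = a")
            case True then show ?thesis using zb b_def by simp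
          next
            case ya: False
            show ?thesis
            proof (cases "y = b")
              case True then show ?thesis using zb be'a conn_edge2[OF aS, where al=al and be=be'] by simp
            next
              case False then show ?thesis using zb be'o ya conn_edge2[OF yS, where al=al and be=be'] by simp
            qed
          qed
        qed
        have tr': "(p, r) \<in> ?c'" if "(p, q) \<in> ?c'" "(q, r) \<in> ?c'" for p q r
          using conn_trans that by metis
        have rf: "(p, p) \<in> ?c'" for p by (rule conn_refl)
        from yz show ?case
        proof (elim disjE conjE)
          assume yz': "(y, z) \<in> ?c'"
          from step(3) show ?case
          proof (elim disjE conjE)
            assume "(x, y) \<in> ?c'" then show ?case using tr'[OF _ yz'] by blast
          next
            assume "(x, a) \<in> ?c'" "(b, y) \<in> ?c'" then show ?case using tr'[OF _ yz'] by blast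
          next
            assume "(x, b) \<in> ?c'" "(a, y) \<in> ?c'" then show ?case using tr'[OF _ yz'] by blast
          qed
        next
          assume ya: "y = a" and zb: "z = b"
          from step(3) show ?case
          proof (elim disjE conjE)
            assume "(x, y) \<in> ?c'" then show ?case using ya rf[of b] zb by blast
          next
            assume "(x, a) \<in> ?c'" "(b, y) \<in> ?c'" then show ?case using rf[of b] zb by blast
          next
            assume "(x, b) \<in> ?c'" "(a, y) \<in> ?c'" then show ?case using zb by blast
          qed
        next
          assume yb: "y = b" and az: "(a, z) \<in> ?c'"
          from step(3) show ?case
          proof (elim disjE conjE)
            assume "(x, y) \<in> ?c'" then show ?case using yb az by blast
          next
            assume "(x, a) \<in> ?c'" "(b, y) \<in> ?c'" then show ?case using tr'[OF _ az] by blast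
          next
            assume "(x, b) \<in> ?c'" "(a, y) \<in> ?c'" then show ?case using az by blast
          qed
        qed
      qed
      define S2 where "S2 = {x\<in>S. (x, a) \<notin> ?c'}"
      have "(\<lambda>x. ?c' `` {x}) ` S \<subseteq> insert (?c' `` {a}) ((\<lambda>x. ?c' `` {x}) ` S2)"
      proof
        fix C assume "C \<in> (\<lambda>x. ?c' `` {x}) ` S"
        then obtain x where x: "x \<in> S" "C = ?c' `` {x}" by auto
        show "C \<in> insert (?c' `` {a}) ((\<lambda>x. ?c' `` {x}) ` S2)"
        proof (cases "(x, a) \<in> ?c'")
          case True then show ?thesis using conn_class[OF pa pb' True x(1)] x by simp
        next
          case False then show ?thesis using x unfolding S2_def by auto
        qed
      qed
      then have k1: "ncomp al be' S \<le> Suc (card ((\<lambda>x. ?c' `` {x}) ` S2))"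
      proof -
        have fi: "finite ((\<lambda>x. ?c' `` {x}) ` S2)" using finS unfolding S2_def by simp
        have "ncomp al be' S \<le> card (insert (?c' `` {a}) ((\<lambda>x. ?c' `` {x}) ` S2))"
          unfolding ncomp_def by (rule card_mono) (use fi \<open>_ \<subseteq> _\<close> in auto)
        also have "\<dots> \<le> Suc (card ((\<lambda>x. ?c' `` {x}) ` S2))" using fi by (simp add: card_insert_if)
        finally show ?thesis .
      qed
      have fS2: "finite S2" using finS unfolding S2_def by simp
      have k2: "card ((\<lambda>x. ?c' `` {x}) ` S2) \<le> card ((\<lambda>x. ?c `` {x}) ` S2)"
      proof (rule card_image_factor[OF fS2], intro ballI impI)
        fix x y assume x: "x \<in> S2" and y: "y \<in> S2" and e: "?c `` {x} = ?c `` {y}"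
        have "(x, y) \<in> ?c" using e conn_refl[of y al be S] by blast
        then have "(x, y) \<in> ?c' \<or> ((x, a) \<in> ?c' \<and> (b, y) \<in> ?c') \<or> ((x, b) \<in> ?c' \<and> (a, y) \<in> ?c')"
          by (rule charac)
        moreover have "(x, a) \<notin> ?c'" using x unfolding S2_def by simp
        moreover have "(a, y) \<notin> ?c'"
        proof
          assume "(a, y) \<in> ?c'"
          then have "(y, a) \<in> ?c'" using conn_sym[OF pa pb' _ aS] by blast
          then show False using y unfolding S2_def by simp
        qed
        ultimately have "(x, y) \<in> ?c'" by blast
        then show "?c' `` {x} = ?c' `` {y}" using conn_class[OF pa pb'] x unfolding S2_def by blast
      qed
      have k3: "card ((\<lambda>x. ?c `` {x}) ` S2) \<le> ncomp al be S"
        unfolding ncomp_def using finS S2_def by (intro card_mono) auto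
      have "ncomp al be' S \<le> ncomp al be S + 1" using k1 k2 k3 by simp
      then show ?thesis using IH cb' c2 by linarith
    qed
  qed
qed

lemma genus:
  assumes "perm_on al S" "perm_on be S"
  shows "ncyc al S + ncyc be S + ncyc (al \<circ> be) S \<le> card S + 2 * ncomp al be S"
  by (rule genus_aux[OF refl assms])

lemma all_less3: "(\<forall>p<(3::nat). P p) \<longleftrightarrow> P 0 \<and> P 1 \<and> P 2"
  by (auto simp: less_Suc_eq eval_nat_numeral)
lemma all_less4: "(\<forall>p<(4::nat). P p) \<longleftrightarrow> P 0 \<and> P 1 \<and> P 2 \<and> P 3"
  by (auto simp: less_Suc_eq eval_nat_numeral)
lemma all_less5: "(\<forall>p<(5::nat). P p) \<longleftrightarrow> P 0 \<and> P 1 \<and> P 2 \<and> P 3 \<and> P 4"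
  by (auto simp: less_Suc_eq eval_nat_numeral)
lemma ex_less3: "(\<exists>p<(3::nat). P p) \<longleftrightarrow> P 0 \<or> P 1 \<or> P 2"
  by (auto simp: less_Suc_eq eval_nat_numeral)
lemma ex_less4: "(\<exists>p<(4::nat). P p) \<longleftrightarrow> P 0 \<or> P 1 \<or> P 2 \<or> P 3"
  by (auto simp: less_Suc_eq eval_nat_numeral)
lemma ex_less5: "(\<exists>p<(5::nat). P p) \<longleftrightarrow> P 0 \<or> P 1 \<or> P 2 \<or> P 3 \<or> P 4"
  by (auto simp: less_Suc_eq eval_nat_numeral)


lemma perm_on_fin3: "(\<forall>p<3. f p < (3::nat)) \<Longrightarrow> (\<forall>p<3. \<forall>q<3. f p = f q \<longrightarrow> p = q) \<Longrightarrow> perm_on f {..<3}"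
  by (rule perm_onI) auto

lemma perm_on_fin4: "(\<forall>p<4. f p < (4::nat)) \<Longrightarrow> (\<forall>p<4. \<forall>q<4. f p = f q \<longrightarrow> p = q) \<Longrightarrow> perm_on f {..<4}"
  by (rule perm_onI) auto

lemma perm_on_fin5: "(\<forall>p<5. f p < (5::nat)) \<Longrightarrow> (\<forall>p<5. \<forall>q<5. f p = f q \<longrightarrow> p = q) \<Longrightarrow> perm_on f {..<5}"
  by (rule perm_onI) auto


definition "s33 p = [0,2,3,1::nat] ! p"
definition "t33 p = [1,0,3,2::nat] ! p"
lemma s33_perm: "perm_on s33 {..<4}"
  by (rule perm_on_fin4) (simp_all only: all_less4, simp_all add: s33_def)
lemma t33_perm: "perm_on t33 {..<4}"
  by (rule perm_on_fin4) (simp_all only: all_less4, simp_all add: t33_def)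
lemma s33_pow: "\<forall>p<4. (s33 ^^ 3) p = p" unfolding all_less4 by (simp add: s33_def eval_nat_numeral)
lemma t33_inv: "\<forall>p<4. t33 (t33 p) = p" unfolding all_less4 by (simp add: t33_def)
lemma f33_pow: "\<forall>p<4. ((s33 \<circ> t33) ^^ 3) p = p" unfolding all_less4 by (simp add: s33_def t33_def eval_nat_numeral)

lemma mono33_2: "\<forall>r<3. \<exists>p<4. ((s33 \<circ> t33) ^^ r) ((s33 ^^ 2) (t33 p)) \<noteq> p"
  unfolding all_less3 ex_less4 by (simp add: s33_def t33_def eval_nat_numeral)


definition "s34 p = [1,2,0::nat] ! p"
definition "t34 p = [0,2,1::nat] ! p"
lemma s34_perm: "perm_on s34 {..<3}"
  by (rule perm_on_fin3) (simp_all only: all_less3, simp_all add: s34_def)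
lemma t34_perm: "perm_on t34 {..<3}"
  by (rule perm_on_fin3) (simp_all only: all_less3, simp_all add: t34_def)
lemma s34_pow: "\<forall>p<3. (s34 ^^ 3) p = p" unfolding all_less3 by (simp add: s34_def eval_nat_numeral)
lemma t34_inv: "\<forall>p<3. t34 (t34 p) = p" unfolding all_less3 by (simp add: t34_def)
lemma f34_pow: "\<forall>p<3. ((s34 \<circ> t34) ^^ 4) p = p" unfolding all_less3 by (simp add: s34_def t34_def eval_nat_numeral)

lemma mono34_2: "\<forall>r<4. \<exists>p<3. ((s34 \<circ> t34) ^^ r) ((s34 ^^ 2) (t34 p)) \<noteq> p"
  unfolding all_less4 ex_less3 by (simp add: s34_def t34_def eval_nat_numeral)


definition "s35 p = [0,1,3,4,2::nat] ! p"
definition "t35 p = [2,3,0,1,4::nat] ! p"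
lemma s35_perm: "perm_on s35 {..<5}"
  by (rule perm_on_fin5) (simp_all only: all_less5, simp_all add: s35_def)
lemma t35_perm: "perm_on t35 {..<5}"
  by (rule perm_on_fin5) (simp_all only: all_less5, simp_all add: t35_def)
lemma s35_pow: "\<forall>p<5. (s35 ^^ 3) p = p" unfolding all_less5 by (simp add: s35_def eval_nat_numeral)
lemma t35_inv: "\<forall>p<5. t35 (t35 p) = p" unfolding all_less5 by (simp add: t35_def)
lemma f35_pow: "\<forall>p<5. ((s35 \<circ> t35) ^^ 5) p = p" unfolding all_less5 by (simp add: s35_def t35_def eval_nat_numeral)

lemma mono35_2: "\<forall>r<5. \<exists>p<5. ((s35 \<circ> t35) ^^ r) ((s35 ^^ 2) (t35 p)) \<noteq> p"
  unfolding all_less5 ex_less5 by (simp add: s35_def t35_def eval_nat_numeral)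


definition "s43 p = [1,2,3,0::nat] ! p"
definition "t43 p = [0,1,3,2::nat] ! p"
lemma s43_perm: "perm_on s43 {..<4}"
  by (rule perm_on_fin4) (simp_all only: all_less4, simp_all add: s43_def)
lemma t43_perm: "perm_on t43 {..<4}"
  by (rule perm_on_fin4) (simp_all only: all_less4, simp_all add: t43_def)
lemma s43_pow: "\<forall>p<4. (s43 ^^ 4) p = p" unfolding all_less4 by (simp add: s43_def eval_nat_numeral)
lemma t43_inv: "\<forall>p<4. t43 (t43 p) = p" unfolding all_less4 by (simp add: t43_def)
lemma f43_pow: "\<forall>p<4. ((s43 \<circ> t43) ^^ 3) p = p" unfolding all_less4 by (simp add: s43_def t43_def eval_nat_numeral)

lemma mono43_2: "\<forall>r<3. \<exists>p<4. ((s43 \<circ> t43) ^^ r) ((s43 ^^ 3) (t43 p)) \<noteq> p"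
  unfolding all_less3 ex_less4 by (simp add: s43_def t43_def eval_nat_numeral)

lemma mono43_3: "\<forall>r<3. \<exists>p<4. ((s43 \<circ> t43) ^^ r) ((s43 ^^ 2) (t43 p)) \<noteq> p"
  unfolding all_less3 ex_less4 by (simp add: s43_def t43_def eval_nat_numeral)


definition "s53 p = [1,2,3,4,0::nat] ! p"
definition "t53 p = [0,2,1,4,3::nat] ! p"
lemma s53_perm: "perm_on s53 {..<5}"
  by (rule perm_on_fin5) (simp_all only: all_less5, simp_all add: s53_def)
lemma t53_perm: "perm_on t53 {..<5}"
  by (rule perm_on_fin5) (simp_all only: all_less5, simp_all add: t53_def)
lemma s53_pow: "\<forall>p<5. (s53 ^^ 5) p = p" unfolding all_less5 by (simp add: s53_def eval_nat_numeral)
lemma t53_inv: "\<forall>p<5. t53 (t53 p) = p" unfolding all_less5 by (simp add: t53_def)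
lemma f53_pow: "\<forall>p<5. ((s53 \<circ> t53) ^^ 3) p = p" unfolding all_less5 by (simp add: s53_def t53_def eval_nat_numeral)

lemma mono53_2: "\<forall>r<3. \<exists>p<5. ((s53 \<circ> t53) ^^ r) ((s53 ^^ 4) (t53 p)) \<noteq> p"
  unfolding all_less3 ex_less5 by (simp add: s53_def t53_def eval_nat_numeral)

lemma mono53_3: "\<forall>r<3. \<exists>p<5. ((s53 \<circ> t53) ^^ r) ((s53 ^^ 3) (t53 p)) \<noteq> p"
  unfolding all_less3 ex_less5 by (simp add: s53_def t53_def eval_nat_numeral)

lemma mono53_4: "\<forall>r<3. \<exists>p<5. ((s53 \<circ> t53) ^^ r) ((s53 ^^ 2) (t53 p)) \<noteq> p"
  unfolding all_less3 ex_less5 by (simp add: s53_def t53_def eval_nat_numeral)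

definition sg :: "('v \<Rightarrow> 'v \<Rightarrow> 'v) \<Rightarrow> 'v \<times> 'v \<Rightarrow> 'v \<times> 'v" where
  "sg rot d = (fst d, rot (fst d) (snd d))"

definition th :: "'v \<times> 'v \<Rightarrow> 'v \<times> 'v" where
  "th d = (snd d, fst d)"

lemma face_succ_sg: "face_succ rot d = sg rot (th d)"
  unfolding face_succ_def sg_def th_def by simp

lemma face_succ_comp: "face_succ rot = sg rot \<circ> th"
  using face_succ_sg by (auto simp: fun_eq_iff)

locale pgraph =
  fixes V :: "'v set" and E :: "'v set set" and rot :: "'v \<Rightarrow> 'v \<Rightarrow> 'v"
    and outer :: "('v \<times> 'v) set" and w :: 'v and k k0 :: nat
  assumes pg: "plane_graph V E rot outer" and tc: "two_connected V E"
    and wV: "w \<in> V" and won: "vertex_on_face w outer" and degw: "degree E w = k0"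
    and degv: "\<forall>v\<in>V - {w}. degree E v = k"
    and k0ge: "2 \<le> k0" and k0le: "k0 + 1 \<le> k"
begin

abbreviation "D \<equiv> darts E"
abbreviation "phi \<equiv> face_succ rot"

lemma simple: "simple_graph V E" using pg unfolding plane_graph_def by simp
lemma finV: "finite V" using simple unfolding simple_graph_def by simp
lemma rs: "rotation_system V E rot" using pg unfolding plane_graph_def plane_embedding_def by simp
lemma euler: "int (card V) - int (card E) + int (card (faces E rot)) = 2"
  using pg unfolding plane_graph_def plane_embedding_def by simp
lemma outer_face: "outer \<in> faces E rot" using pg unfolding plane_graph_def by simp
lemma connV: "connected_on V E" using tc unfolding two_connected_def by simp

lemma edge_form: "e \<in> E \<Longrightarrow> \<exists>u v. e = {u, v} \<and> u \<noteq> v \<and> u \<in> V \<and> v \<in> V"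
  using simple unfolding simple_graph_def by blast

lemma edgeD: assumes "{u, v} \<in> E" shows "u \<in> V" "v \<in> V" "u \<noteq> v"
proof -
  obtain a b where ab: "{u, v} = {a, b}" "a \<noteq> b" "a \<in> V" "b \<in> V" using edge_form[OF assms] by blast
  then show "u \<in> V" "v \<in> V" by (auto simp: doubleton_eq_iff)
  show "u \<noteq> v" using ab by (auto simp: doubleton_eq_iff)
qed

lemma dart_iff: "(u, v) \<in> D \<longleftrightarrow> {u, v} \<in> E" unfolding darts_def by simp

lemma nbrs_iff: "v \<in> nbrs E u \<longleftrightarrow> {u, v} \<in> E" unfolding nbrs_def by simp

lemma dart_nbrs: "(u, v) \<in> D \<longleftrightarrow> v \<in> nbrs E u" unfolding darts_def nbrs_def by simp

lemma D_Sigma: "D = Sigma V (nbrs E)"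
  using edgeD unfolding darts_def nbrs_def by auto

lemma nbrs_sub: "nbrs E u \<subseteq> V" using edgeD unfolding nbrs_def by auto

lemma fin_nbrs: "finite (nbrs E u)" using nbrs_sub finV finite_subset by blast

lemma finD: "finite D" unfolding D_Sigma using finV fin_nbrs by auto

lemma deg_ge2: "u \<in> V \<Longrightarrow> degree E u \<ge> 2"
  using degw degv k0ge k0le by (cases "u = w") auto

lemma nbrs_ne: "u \<in> V \<Longrightarrow> nbrs E u \<noteq> {}"
  using deg_ge2[of u] unfolding degree_def by (metis card.empty not_numeral_le_zero)

lemma dart_sym: "d \<in> D \<Longrightarrow> th d \<in> D"
  unfolding darts_def th_def by (auto simp: insert_commute)

lemma dartD: "d \<in> D \<Longrightarrow> fst d \<in> V \<and> snd d \<in> V \<and> fst d \<noteq> snd d"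
  unfolding darts_def using edgeD by auto

lemma rot_in: assumes "u \<in> V" "v \<in> nbrs E u" shows "rot u v \<in> nbrs E u"
  using rs assms unfolding rotation_system_def by blast

lemma rot_inj: assumes "u \<in> V" shows "inj_on (rot u) (nbrs E u)"
proof (rule finite_surj_inj[OF fin_nbrs])
  show "nbrs E u \<subseteq> rot u ` nbrs E u" using rs assms unfolding rotation_system_def by blast
qed

lemma rot_orbit: assumes "u \<in> V" "v \<in> nbrs E u" shows "nbrs E u = {(rot u ^^ n) v | n. True}"
  using rs assms unfolding rotation_system_def by blast

lemma perm_sg: "perm_on (sg rot) D"
proof (rule perm_onI[OF finD])
  fix d assume d: "d \<in> D"
  obtain u v where uv: "d = (u, v)" by (cases d)
  have "u \<in> V" "v \<in> nbrs E u" using d uv dartD dart_nbrs by auto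
  then show "sg rot d \<in> D" using rot_in uv unfolding sg_def dart_nbrs by simp
next
  fix d e assume d: "d \<in> D" and e: "e \<in> D" and eq: "sg rot d = sg rot e"
  obtain u v where uv: "d = (u, v)" by (cases d)
  obtain u' v' where uv': "e = (u', v')" by (cases e)
  have "u = u'" using eq uv uv' unfolding sg_def by simp
  moreover have "u \<in> V" "v \<in> nbrs E u" "v' \<in> nbrs E u" using d e uv uv' dartD dart_nbrs \<open>u = u'\<close> by auto
  moreover have "rot u v = rot u v'" using eq uv uv' \<open>u = u'\<close> unfolding sg_def by simp
  ultimately show "d = e" using rot_inj uv uv' unfolding inj_on_def by blast
qed

lemma perm_th: "perm_on th D"
proof (rule perm_onI[OF finD])
  fix d assume "d \<in> D" then show "th d \<in> D" by (rule dart_sym)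
next
  fix d e assume "th d = th e" then show "d = e" unfolding th_def by (auto simp: prod_eq_iff)
qed

lemma th_th: "th (th d) = d" unfolding th_def by simp

lemma perm_phi: "perm_on phi D"
  unfolding face_succ_comp by (rule perm_on_comp[OF perm_sg perm_th])

lemma sg_pow: "((sg rot) ^^ n) (u, v) = (u, (rot u ^^ n) v)"
  by (induction n) (auto simp: sg_def)

lemma fst_sg_pow: "fst (((sg rot) ^^ n) d) = fst d"
  using sg_pow[of n "fst d" "snd d"] by simp

lemma orb_sg: assumes "d \<in> D" shows "orb (sg rot) d = {fst d} \<times> nbrs E (fst d)"
proof -
  obtain u v where uv: "d = (u, v)" by (cases d)
  have u: "u \<in> V" and v: "v \<in> nbrs E u" using assms uv dartD dart_nbrs by auto
  have "orb (sg rot) d = {(u, (rot u ^^ n) v) | n. True}" unfolding orb_def uv sg_pow by simp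
  also have "\<dots> = {u} \<times> {(rot u ^^ n) v | n. True}" by auto
  finally show ?thesis using rot_orbit[OF u v] uv by simp
qed

lemma card_orb_sg: "d \<in> D \<Longrightarrow> card (orb (sg rot) d) = degree E (fst d)"
  using orb_sg unfolding degree_def by (simp add: card_cartesian_product_singleton)

lemma faces_orb: "faces E rot = orb phi ` D"
  unfolding faces_def face_of_def orb_def by simp

lemma ncyc_sg: "ncyc (sg rot) D = card V"
proof -
  have "orb (sg rot) ` D = (\<lambda>u. {u} \<times> nbrs E u) ` V"
  proof
    show "orb (sg rot) ` D \<subseteq> (\<lambda>u. {u} \<times> nbrs E u) ` V" using orb_sg dartD by auto
    show "(\<lambda>u. {u} \<times> nbrs E u) ` V \<subseteq> orb (sg rot) ` D"
    proof
      fix Q assume "Q \<in> (\<lambda>u. {u} \<times> nbrs E u) ` V"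
      then obtain u where u: "u \<in> V" "Q = {u} \<times> nbrs E u" by auto
      obtain v where v: "v \<in> nbrs E u" using nbrs_ne[OF u(1)] by auto
      have "(u, v) \<in> D" using v dart_nbrs by simp
      then show "Q \<in> orb (sg rot) ` D" using orb_sg[of "(u, v)"] u by force
    qed
  qed
  moreover have "inj_on (\<lambda>u. {u} \<times> nbrs E u) V"
    using nbrs_ne by (auto intro!: inj_onI)
  ultimately show ?thesis unfolding ncyc_def by (simp add: card_image)
qed

lemma card_D_deg: "card D = (\<Sum>v\<in>V. degree E v)"
  unfolding D_Sigma degree_def using finV fin_nbrs by simp

lemma card_D_k: "card D = k * (card V - 1) + k0"
proof -
  have "(\<Sum>v\<in>V. degree E v) = (\<Sum>v\<in>V - {w}. degree E v) + degree E w"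
    using finV wV by (simp add: sum.remove add.commute)
  also have "\<dots> = k * (card V - 1) + k0" using degv degw finV wV by simp
  finally show ?thesis using card_D_deg by simp
qed

lemma card_D_E: "card D = 2 * card E"
proof -
  let ?f = "\<lambda>d. {fst d, snd d}"
  have img: "?f ` D = E"
  proof
    show "?f ` D \<subseteq> E" unfolding darts_def by auto
    show "E \<subseteq> ?f ` D"
    proof
      fix e assume e: "e \<in> E"
      then obtain u v where "e = {u, v}" using edge_form by blast
      then show "e \<in> ?f ` D" using e unfolding darts_def by force
    qed
  qed
  have "card D = (\<Sum>d\<in>D. 1::nat)" by simp
  also have "\<dots> = (\<Sum>e\<in>?f ` D. \<Sum>d\<in>{d\<in>D. ?f d = e}. 1)" by (rule sum.image_gen[OF finD])
  also have "\<dots> = (\<Sum>e\<in>E. 2)"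
  proof (rule sum.cong[OF img])
    fix e assume e: "e \<in> E"
    then obtain u v where uv: "e = {u, v}" "u \<noteq> v" using edge_form by blast
    have "{d\<in>D. ?f d = e} = {(u, v), (v, u)}"
      using e uv unfolding darts_def by (auto simp: doubleton_eq_iff insert_commute)
    then show "(\<Sum>d\<in>{d\<in>D. ?f d = e}. 1) = 2" using uv by simp
  qed
  finally show ?thesis by simp
qed

end

context pgraph begin

lemma outer_orb: obtains d where "d \<in> D" "outer = orb phi d"
  using outer_face faces_orb by auto

lemma outer_sub: "outer \<subseteq> D"
  using outer_orb orb_subset[OF perm_phi] by metis

lemma fin_outer: "finite outer" using outer_sub finD finite_subset by blast

lemma outer_orb_eq: "x \<in> outer \<Longrightarrow> orb phi x = outer"
  using outer_orb orb_eq[OF perm_phi] by metis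

lemma outer_ne: "outer \<noteq> {}"
proof -
  obtain d where "d \<in> D" "outer = orb phi d" by (rule outer_orb)
  then show ?thesis using orb_self[of d phi] by auto
qed

lemma ell_pos: "card outer > 0" using fin_outer outer_ne by (simp add: card_gt_0_iff)

lemma outer_phi: "x \<in> outer \<Longrightarrow> phi x \<in> outer"
  using outer_orb_eq orb_step orb_self by metis

definition y0 where "y0 = (SOME y. (w, y) \<in> outer)"

lemma wy0: "(w, y0) \<in> outer"
  using won unfolding vertex_on_face_def y0_def by (metis someI_ex)

definition d0 where "d0 = (phi ^^ (card outer - 1)) (w, y0)"

lemma d0_outer: "d0 \<in> outer"
  unfolding d0_def using outer_orb_eq[OF wy0] orb_funpow by metis

lemma phi_d0: "phi d0 = (w, y0)"
proof -
  have wD: "(w, y0) \<in> D" using wy0 outer_sub by blast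
  have "(phi ^^ card (orb phi (w, y0))) (w, y0) = (w, y0)" by (rule orb_period[OF perm_phi wD])
  then have "(phi ^^ card outer) (w, y0) = (w, y0)" using outer_orb_eq[OF wy0] by simp
  moreover have "card outer = Suc (card outer - 1)" using ell_pos by simp
  ultimately show ?thesis unfolding d0_def by (metis funpow.simps(2) o_apply)
qed

definition dw where "dw = th d0"

lemma d0D: "d0 \<in> D" using d0_outer outer_sub by blast
lemma dwD: "dw \<in> D" unfolding dw_def by (rule dart_sym[OF d0D])
lemma th_dw: "th dw = d0" unfolding dw_def by (simp add: th_th)
lemma sg_dw: "sg rot dw = (w, y0)" using phi_d0 face_succ_sg[of rot d0] unfolding dw_def by simp
lemma fst_dw: "fst dw = w" using sg_dw unfolding sg_def by simp
lemma card_orb_dw: "card (orb (sg rot) dw) = k0" using card_orb_sg[OF dwD] fst_dw degw by simp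

lemma th_eq_dw: "th d = dw \<longleftrightarrow> d = d0"
  using th_th th_dw by metis

lemma card_faces_sum: "real (card (faces E rot)) = (\<Sum>d\<in>D. 1 / real (card (orb phi d)))"
  unfolding faces_orb by (rule sum_orb[OF perm_phi subset_refl perm_onD[OF perm_phi]])

lemma internal_face: "d \<in> D \<Longrightarrow> d \<notin> outer \<Longrightarrow> orb phi d \<in> faces E rot - {outer}"
  using faces_orb orb_self by fastforce

lemma not_outer_iter: assumes "d \<in> D" "d \<notin> outer" shows "(phi ^^ i) d \<notin> outer"
proof
  assume "(phi ^^ i) d \<in> outer"
  then have "orb phi ((phi ^^ i) d) = outer" by (rule outer_orb_eq)
  moreover have "orb phi ((phi ^^ i) d) = orb phi d" by (rule orb_eq[OF perm_phi assms(1) orb_funpow])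
  ultimately show False using assms(2) orb_self by metis
qed

lemma dart_conn_all:
  assumes AD: "A \<subseteq> D" and ne: "A \<noteq> {}" and csg: "\<And>d. d \<in> A \<Longrightarrow> sg rot d \<in> A"
    and cth: "\<And>d. d \<in> A \<Longrightarrow> th d \<in> A"
  shows "A = D"
proof -
  have orbA: "orb (sg rot) d \<subseteq> A" if "d \<in> A" for d
  proof
    fix e assume "e \<in> orb (sg rot) d"
    then obtain n where "e = ((sg rot) ^^ n) d" unfolding orb_def by auto
    moreover have "((sg rot) ^^ n) d \<in> A" for n using that csg by (induction n) auto
    ultimately show "e \<in> A" by simp
  qed
  let ?U = "{u. \<exists>v. (u, v) \<in> A}"
  have allat: "(u, v) \<in> A" if uU: "u \<in> ?U" and uvD: "(u, v) \<in> D" for u v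
  proof -
    obtain v' where v': "(u, v') \<in> A" using uU by blast
    then have "orb (sg rot) (u, v') = {u} \<times> nbrs E u" using orb_sg AD by auto
    then show ?thesis using orbA[OF v'] uvD dart_nbrs by auto
  qed
  obtain d where d: "d \<in> A" using ne by auto
  have dD: "d \<in> D" using d AD by blast
  have u0: "fst d \<in> ?U" "fst d \<in> V" using d dartD[OF dD] by (auto intro: exI[of _ "snd d"])
  have "y \<in> ?U" if "y \<in> V" for y
  proof -
    have "(fst d, y) \<in> ({(a, b). a \<in> V \<and> b \<in> V \<and> {a, b} \<in> E})\<^sup>*"
      using connV u0(2) that unfolding connected_on_def by blast
    then show ?thesis
    proof (induction rule: rtrancl_induct)
      case base then show ?case using u0 by simp
    next
      case (step a b)
      then have "(a, b) \<in> D" using dart_iff by auto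
      then have "(a, b) \<in> A" using allat step by blast
      then have "th (a, b) \<in> A" by (rule cth)
      then show ?case unfolding th_def by auto
    qed
  qed
  note UV = this
  show ?thesis
  proof
    show "D \<subseteq> A"
    proof
      fix e assume eD: "e \<in> D"
      obtain a b where ab: "e = (a, b)" by (cases e)
      have "a \<in> V" using dartD[OF eD] ab by simp
      then have "a \<in> ?U" by (rule UV)
      then show "e \<in> A" using allat eD ab by blast
    qed
  qed (rule AD)
qed

end

lemma sum_prod_fst: assumes "finite A" "finite P"
  shows "(\<Sum>x\<in>A \<times> P. (g (fst x) :: real)) = real (card P) * (\<Sum>d\<in>A. g d)"
proof -
  have "(\<Sum>d\<in>A. \<Sum>p\<in>P. g d) = (\<Sum>(d, p)\<in>A \<times> P. g d)" by (rule sum.cartesian_product)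
  then have "(\<Sum>x\<in>A \<times> P. g (fst x)) = (\<Sum>d\<in>A. \<Sum>p\<in>P. g d)"
    by (simp add: case_prod_unfold)
  also have "\<dots> = (\<Sum>d\<in>A. real (card P) * g d)" by simp
  also have "\<dots> = real (card P) * (\<Sum>d\<in>A. g d)" by (simp add: sum_distrib_left)
  finally show ?thesis .
qed

lemma funpow_mod: assumes "\<And>q. q \<in> P \<Longrightarrow> g q \<in> P" "\<And>q. q \<in> P \<Longrightarrow> (g ^^ L) q = q" "q \<in> P"
  shows "(g ^^ n) q = (g ^^ (n mod L)) q"
proof -
  have "(g ^^ (L * j)) q = q" for j using funpow_mult_fix[where f=g and p=L and x=q and n=j] assms(2,3) by simp
  moreover have "(g ^^ n) q = (g ^^ (n mod L)) ((g ^^ (L * (n div L))) q)"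
    by (metis funpow_add mod_div_mult_eq mult.commute o_apply)
  ultimately show ?thesis by simp
qed

locale pcover = pgraph V E rot outer w k k0 for V :: "'v set" and E rot outer w k k0 +
  fixes L N :: nat and sP tP :: "nat \<Rightarrow> nat"
  assumes intL: "\<forall>f\<in>faces E rot - {outer}. card f = L"
    and Lpos: "L > 0"
    and psP: "perm_on sP {..<N}" and ptP: "perm_on tP {..<N}"
    and sPk: "\<forall>p<N. (sP ^^ k) p = p" and tPt: "\<forall>p<N. tP (tP p) = p"
    and fPL: "\<forall>p<N. ((sP \<circ> tP) ^^ L) p = p"
    and mono: "\<forall>r<L. \<exists>p<N. ((sP \<circ> tP) ^^ r) ((sP ^^ (k + 1 - k0)) (tP p)) \<noteq> p"
begin

abbreviation "P \<equiv> {..<N}"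
abbreviation "m \<equiv> k + 1 - k0"
abbreviation "DH \<equiv> D \<times> P"

definition fP where "fP = sP \<circ> tP"
lemma fP_apply: "fP p = sP (tP p)" unfolding fP_def by simp

definition sH where "sH x = (sg rot (fst x), (sP ^^ (if fst x = dw then m else 1)) (snd x))"
definition tH where "tH x = (th (fst x), tP (snd x))"
definition fH where "fH = sH \<circ> tH"

lemma fH_eq: "fH x = (phi (fst x), (sP ^^ (if fst x = d0 then m else 1)) (tP (snd x)))"
  unfolding fH_def sH_def tH_def using face_succ_sg[of rot "fst x"] th_eq_dw[of "fst x"] by simp

lemma finDH: "finite DH" using finD by simp

lemma psP_pow: "q \<in> P \<Longrightarrow> (sP ^^ j) q \<in> P" by (rule funpow_in[OF psP])

lemma perm_sH: "perm_on sH DH"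
proof (rule perm_onI[OF finDH])
  fix x assume x: "x \<in> DH"
  show "sH x \<in> DH" using x perm_onD[OF perm_sg] psP_pow unfolding sH_def by (auto simp: mem_Times_iff)
next
  fix x y assume x: "x \<in> DH" and y: "y \<in> DH" and e: "sH x = sH y"
  have f: "fst x = fst y" using e x y perm_on_inj[OF perm_sg] unfolding sH_def by (auto simp: mem_Times_iff)
  then have "(sP ^^ (if fst x = dw then m else 1)) (snd x) = (sP ^^ (if fst x = dw then m else 1)) (snd y)"
    using e unfolding sH_def by simp
  then have "snd x = snd y" using funpow_inj[OF psP] x y by (auto simp: mem_Times_iff)
  then show "x = y" using f by (simp add: prod_eq_iff)
qed

lemma perm_tH: "perm_on tH DH"
proof (rule perm_onI[OF finDH])
  fix x assume x: "x \<in> DH"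
  show "tH x \<in> DH" using x dart_sym perm_onD[OF ptP] unfolding tH_def by (auto simp: mem_Times_iff)
next
  fix x y assume x: "x \<in> DH" and y: "y \<in> DH" and e: "tH x = tH y"
  then have "th (fst x) = th (fst y)" "tP (snd x) = tP (snd y)" unfolding tH_def by auto
  then have "fst x = fst y" "snd x = snd y" using th_th perm_on_inj[OF ptP] x y
    by (metis, auto simp: mem_Times_iff)
  then show "x = y" by (simp add: prod_eq_iff)
qed

lemma perm_fH: "perm_on fH DH" unfolding fH_def by (rule perm_on_comp[OF perm_sH perm_tH])

lemma fst_sH_pow: "fst ((sH ^^ n) x) = ((sg rot) ^^ n) (fst x)"
  by (induction n) (auto simp: sH_def)

lemma fst_fH_pow: "fst ((fH ^^ n) x) = (phi ^^ n) (fst x)"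
  by (induction n) (auto simp: fH_eq)

lemma sH_pow: "(\<forall>i<n. ((sg rot) ^^ i) d \<noteq> dw) \<Longrightarrow> (sH ^^ n) (d, p) = (((sg rot) ^^ n) d, (sP ^^ n) p)"
proof (induction n)
  case (Suc n)
  then have IH: "(sH ^^ n) (d, p) = (((sg rot) ^^ n) d, (sP ^^ n) p)" by simp
  have "((sg rot) ^^ n) d \<noteq> dw" using Suc.prems by simp
  then show ?case using IH unfolding sH_def by simp
qed simp

lemma fH_pow: "(\<forall>i<n. (phi ^^ i) d \<noteq> d0) \<Longrightarrow> (fH ^^ n) (d, p) = ((phi ^^ n) d, (fP ^^ n) p)"
proof (induction n)
  case (Suc n)
  then have IH: "(fH ^^ n) (d, p) = ((phi ^^ n) d, (fP ^^ n) p)" by simp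
  have "(phi ^^ n) d \<noteq> d0" using Suc.prems by simp
  have "(fH ^^ Suc n) (d, p) = fH ((fH ^^ n) (d, p))" by simp
  also have "\<dots> = fH ((phi ^^ n) d, (fP ^^ n) p)" using IH by simp
  also have "\<dots> = (phi ((phi ^^ n) d), fP ((fP ^^ n) p))"
    using \<open>(phi ^^ n) d \<noteq> d0\<close> by (simp only: fH_eq) (simp add: fP_apply)
  finally show ?case by simp
qed simp

lemma orb_sH_le: assumes x: "x \<in> DH" shows "card (orb sH x) \<le> card (orb (sg rot) (fst x))"
proof (cases "fst (fst x) = w")
  case False
  obtain d p where dp: "x = (d, p)" by (cases x)
  have dD: "d \<in> D" and pP: "p \<in> P" using x dp by auto
  have ne: "\<forall>i. ((sg rot) ^^ i) d \<noteq> dw"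
  proof (intro allI notI)
    fix i assume "((sg rot) ^^ i) d = dw"
    then have "fst d = w" using fst_sg_pow[of i d] fst_dw by simp
    then show False using False dp by simp
  qed
  let ?c = "card (orb (sg rot) d)"
  have c: "?c = k" using card_orb_sg[OF dD] degv False dp dartD[OF dD] by simp
  have "(sH ^^ ?c) (d, p) = (((sg rot) ^^ ?c) d, (sP ^^ ?c) p)" using ne by (intro sH_pow) simp
  also have "\<dots> = (d, p)" using orb_period[OF perm_sg dD] c sPk pP by simp
  finally have "card (orb sH (d, p)) \<le> ?c"
    using orb_le[where f=sH and c="?c" and x="(d,p)"] card_orb_pos[OF perm_sg dD] by blast
  then show ?thesis using dp by simp
next
  case True
  obtain d p where dp: "x = (d, p)" by (cases x)
  have dD: "d \<in> D" and pP: "p \<in> P" using x dp by auto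
  have "fst d = w" using True dp by simp
  then have "orb (sg rot) d = orb (sg rot) dw" using orb_sg[OF dD] orb_sg[OF dwD] fst_dw by simp
  then have "dw \<in> orb (sg rot) d" using orb_self[of dw "sg rot"] by simp
  then obtain j where j: "dw = ((sg rot) ^^ j) d" unfolding orb_def by auto
  define q where "q = snd ((sH ^^ j) x)"
  have "fst ((sH ^^ j) x) = dw" using fst_sH_pow[of j x] j dp by simp
  then have xq: "(sH ^^ j) x = (dw, q)" unfolding q_def by (simp add: prod_eq_iff)
  have qP: "q \<in> P" using funpow_in[OF perm_sH x, of j] xq by auto
  have oeq: "orb sH x = orb sH (dw, q)" using orb_eq[OF perm_sH x, of "(dw, q)"] orb_funpow[where f=sH and n=j and x=x] xq by simp
  have oeq2: "orb (sg rot) d = orb (sg rot) dw" using orb_eq[OF perm_sg dD] \<open>dw \<in> orb (sg rot) d\<close> by simp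
  obtain kk where kk: "k0 = Suc kk" using k0ge by (cases k0) auto
  have ne: "\<forall>i<kk. ((sg rot) ^^ i) (sg rot dw) \<noteq> dw"
  proof (intro allI impI notI)
    fix i assume i: "i < kk" and e: "((sg rot) ^^ i) (sg rot dw) = dw"
    have "((sg rot) ^^ Suc i) dw = dw" using e by (simp only: funpow_Suc_right o_apply)
    then have "card (orb (sg rot) dw) \<le> Suc i" using orb_le[where f="sg rot" and c="Suc i" and x=dw] by simp
    then show False using i card_orb_dw kk by simp
  qed
  have "(sH ^^ k0) (dw, q) = (sH ^^ kk) (sH (dw, q))"
    unfolding kk by (simp only: funpow_Suc_right o_apply)
  also have "sH (dw, q) = (sg rot dw, (sP ^^ m) q)" unfolding sH_def by simp
  also have "(sH ^^ kk) (sg rot dw, (sP ^^ m) q) =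
      (((sg rot) ^^ kk) (sg rot dw), (sP ^^ kk) ((sP ^^ m) q))"
    by (rule sH_pow[OF ne])
  also have "((sg rot) ^^ kk) (sg rot dw) = ((sg rot) ^^ k0) dw"
    unfolding kk by (simp only: funpow_Suc_right o_apply)
  also have "\<dots> = dw" using orb_period[OF perm_sg dwD] card_orb_dw by simp
  also have "(sP ^^ kk) ((sP ^^ m) q) = (sP ^^ k) q"
  proof -
    have "kk + m = k" using k0ge k0le kk by simp
    moreover have "(sP ^^ (kk + m)) q = (sP ^^ kk) ((sP ^^ m) q)" by (simp add: funpow_add)
    ultimately show ?thesis by simp
  qed
  also have "\<dots> = q" using sPk qP by simp
  finally have "card (orb sH (dw, q)) \<le> k0"
    using orb_le[where f=sH and c=k0 and x="(dw,q)"] k0ge by simp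
  then show ?thesis using oeq oeq2 card_orb_dw dp by simp
qed

lemma orb_tH_le: assumes x: "x \<in> DH" shows "card (orb tH x) \<le> 2"
proof -
  obtain d p where dp: "x = (d, p)" by (cases x)
  have "(tH ^^ 2) x = x" using x th_th[of d] tPt dp unfolding tH_def by (simp add: numeral_2_eq_2)
  then show ?thesis using orb_le[where f=tH and c=2 and x=x] by simp
qed

end

context pcover begin

lemma fP_in: "q \<in> P \<Longrightarrow> fP q \<in> P"
  using perm_onD[OF psP] perm_onD[OF ptP] unfolding fP_def by simp

lemma fP_L: "q \<in> P \<Longrightarrow> (fP ^^ L) q = q"
  using fPL unfolding fP_def[symmetric] by simp

lemma orb_fH_int_le: assumes x: "x \<in> DH" and no: "fst x \<notin> outer"
  shows "card (orb fH x) \<le> card (orb phi (fst x))"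
proof -
  obtain d p where dp: "x = (d, p)" by (cases x)
  have dD: "d \<in> D" and pP: "p \<in> P" using x dp by auto
  have dno: "d \<notin> outer" using no dp by simp
  have ne: "\<forall>i<n. (phi ^^ i) d \<noteq> d0" for n using not_outer_iter[OF dD dno] d0_outer by metis
  let ?c = "card (orb phi d)"
  have c: "?c = L" using intL internal_face[OF dD dno] unfolding face_length_def by blast
  have "(fH ^^ ?c) (d, p) = ((phi ^^ ?c) d, (fP ^^ ?c) p)" by (rule fH_pow[OF ne])
  also have "\<dots> = (d, p)" using orb_period[OF perm_phi dD] c fP_L[OF pP] by simp
  finally have "card (orb fH (d, p)) \<le> ?c"
    using orb_le[where f=fH and c="?c" and x="(d,p)"] card_orb_pos[OF perm_phi dD] by blast
  then show ?thesis using dp by simp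
qed

lemma orb_fH_ge: assumes x: "x \<in> DH" shows "card (orb phi (fst x)) \<le> card (orb fH x)"
proof -
  have "orb phi (fst x) \<subseteq> fst ` orb fH x"
  proof
    fix e assume "e \<in> orb phi (fst x)"
    then obtain n where "e = (phi ^^ n) (fst x)" unfolding orb_def by auto
    then have "e = fst ((fH ^^ n) x)" using fst_fH_pow by simp
    then show "e \<in> fst ` orb fH x" using orb_funpow[where f=fH and n=n and x=x] by blast
  qed
  moreover have "finite (orb fH x)" by (rule finite_orb[OF perm_fH x])
  ultimately show ?thesis by (meson card_image_le card_mono finite_imageI le_trans)
qed

lemma special: "\<exists>p0<N. card (orb fH (d0, p0)) \<noteq> card outer"
proof -
  define l where "l = card outer"
  have lpos: "l > 0" unfolding l_def by (rule ell_pos)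
  define r where "r = (l - 1) mod L"
  have "r < L" unfolding r_def using Lpos by simp
  then obtain p0 where p0: "p0 < N" "(fP ^^ r) ((sP ^^ m) (tP p0)) \<noteq> p0"
    using mono unfolding fP_def[symmetric] by blast
  define q where "q = (sP ^^ m) (tP p0)"
  have qP: "q \<in> P" unfolding q_def using psP_pow perm_onD[OF ptP] p0(1) by simp
  have orbd0: "orb phi d0 = outer" by (rule outer_orb_eq[OF d0_outer])
  have "card (orb fH (d0, p0)) \<noteq> l"
  proof
    assume cl: "card (orb fH (d0, p0)) = l"
    have x: "(d0, p0) \<in> DH" using d0D p0 by simp
    have "(fH ^^ l) (d0, p0) = (d0, p0)" using orb_period[OF perm_fH x] cl by simp
    moreover have "(fH ^^ l) (d0, p0) = (fH ^^ (l - 1)) (fH (d0, p0))"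
    proof -
      have "l = Suc (l - 1)" using lpos by simp
      then show ?thesis by (metis funpow_Suc_right o_apply)
    qed
    moreover have "fH (d0, p0) = (phi d0, q)" unfolding q_def by (simp add: fH_eq)
    moreover have ne: "\<forall>i<l - 1. (phi ^^ i) (phi d0) \<noteq> d0"
    proof (intro allI impI notI)
      fix i assume i: "i < l - 1" and e: "(phi ^^ i) (phi d0) = d0"
      have "(phi ^^ Suc i) d0 = d0" using e by (simp only: funpow_Suc_right o_apply)
      then have "card (orb phi d0) \<le> Suc i" using orb_le[where f=phi and c="Suc i" and x=d0] by simp
      then show False using i orbd0 l_def by simp
    qed
    ultimately have "snd ((fH ^^ (l - 1)) (phi d0, q)) = p0" by simp
    moreover have "(fH ^^ (l - 1)) (phi d0, q) = ((phi ^^ (l - 1)) (phi d0), (fP ^^ (l - 1)) q)"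
      by (rule fH_pow[OF ne])
    ultimately have "(fP ^^ (l - 1)) q = p0" by simp
    moreover have "(fP ^^ (l - 1)) q = (fP ^^ r) q" unfolding r_def
      by (rule funpow_mod[OF fP_in fP_L qP])
    ultimately show False using p0(2) q_def by simp
  qed
  then show ?thesis using p0(1) l_def by blast
qed

end

context pcover begin

definition OP where "OP = outer \<times> P"

lemma OP_sub: "OP \<subseteq> DH" unfolding OP_def using outer_sub by auto

lemma OP_inv: "x \<in> OP \<Longrightarrow> fH x \<in> OP"
  unfolding OP_def using outer_phi psP_pow perm_onD[OF ptP] by (auto simp: fH_eq mem_Times_iff)

lemma finP: "finite P" by simp

lemma b_lt: "card (orb fH ` OP) < N"
proof -
  define l where "l = card outer"
  have lpos: "l > 0" unfolding l_def by (rule ell_pos)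
  have "real (card (orb fH ` OP)) = (\<Sum>x\<in>OP. 1 / real (card (orb fH x)))"
    by (rule sum_orb[OF perm_fH OP_sub OP_inv])
  also have "\<dots> < (\<Sum>x\<in>OP. 1 / real l)"
  proof (rule sum_strict_mono_ex1)
    show "finite OP" unfolding OP_def using fin_outer by simp
    have ge: "l \<le> card (orb fH x)" if x: "x \<in> OP" for x
    proof -
      have "orb phi (fst x) = outer" using x outer_orb_eq unfolding OP_def by (auto simp: mem_Times_iff)
      then show ?thesis using orb_fH_ge[of x] x OP_sub l_def by auto
    qed
    show "\<forall>x\<in>OP. 1 / real (card (orb fH x)) \<le> 1 / real l"
    proof
      fix x assume x: "x \<in> OP"
      have "real l \<le> real (card (orb fH x))" using ge[OF x] by simp
      then show "1 / real (card (orb fH x)) \<le> 1 / real l" using lpos by (simp add: frac_le)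
    qed
    obtain p0 where p0: "p0 < N" "card (orb fH (d0, p0)) \<noteq> card outer" using special by blast
    have x0: "(d0, p0) \<in> OP" unfolding OP_def using d0_outer p0 by simp
    have "l < card (orb fH (d0, p0))" using ge[OF x0] p0(2) l_def by simp
    then have "1 / real (card (orb fH (d0, p0))) < 1 / real l" using lpos
      by (simp add: frac_less2)
    then show "\<exists>x\<in>OP. 1 / real (card (orb fH x)) < 1 / real l" using x0 by blast
  qed
  also have "\<dots> = real N"
    unfolding OP_def using lpos fin_outer l_def outer_ne by simp
  finally show ?thesis by simp
qed

lemma ncomp_le_b: "ncomp sH tH DH \<le> card (orb fH ` OP)"
proof -
  let ?c = "conn sH tH DH"
  have reach: "\<exists>y\<in>OP. (x, y) \<in> ?c" if x: "x \<in> DH" for x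
  proof -
    define A where "A = {d\<in>D. \<exists>p. (x, (d, p)) \<in> ?c}"
    have xc: "(x, y) \<in> ?c \<Longrightarrow> y \<in> DH" for y using conn_in[OF perm_sH perm_tH _ x] by blast
    have "A = D"
    proof (rule dart_conn_all)
      show "A \<subseteq> D" unfolding A_def by blast
      have "fst x \<in> A" unfolding A_def using x conn_refl[of x sH tH DH] by (auto intro: exI[of _ "snd x"])
      then show "A \<noteq> {}" by blast
    next
      fix d assume "d \<in> A"
      then obtain p where p: "(x, (d, p)) \<in> ?c" and dD: "d \<in> D" unfolding A_def by blast
      have dp: "(d, p) \<in> DH" using xc[OF p] .
      have e1: "((d, p), sH (d, p)) \<in> ?c" by (rule conn_edge1[OF dp])
      have e2: "((d, p), tH (d, p)) \<in> ?c" by (rule conn_edge2[OF dp])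
      have "(x, sH (d, p)) \<in> ?c" using conn_trans[OF p e1] .
      moreover have "fst (sH (d, p)) = sg rot d" unfolding sH_def by simp
      moreover have "sg rot d \<in> D" using perm_onD[OF perm_sg dD] .
      ultimately show "sg rot d \<in> A" unfolding A_def by (metis (mono_tags, lifting) mem_Collect_eq prod.collapse)
    next
      fix d assume "d \<in> A"
      then obtain p where p: "(x, (d, p)) \<in> ?c" and dD: "d \<in> D" unfolding A_def by blast
      have dp: "(d, p) \<in> DH" using xc[OF p] .
      have e2: "((d, p), tH (d, p)) \<in> ?c" by (rule conn_edge2[OF dp])
      have "(x, tH (d, p)) \<in> ?c" using conn_trans[OF p e2] .
      moreover have "tH (d, p) = (th d, tP p)" unfolding tH_def by simp
      moreover have "th d \<in> D" using dart_sym[OF dD] .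
      ultimately show "th d \<in> A" unfolding A_def by auto
    qed
    then have "d0 \<in> A" using d0D by simp
    then obtain p where p: "(x, (d0, p)) \<in> ?c" unfolding A_def by blast
    have "(d0, p) \<in> DH" using xc[OF p] .
    then have "(d0, p) \<in> OP" unfolding OP_def using d0_outer by simp
    then show ?thesis using p by blast
  qed
  have "(\<lambda>x. ?c `` {x}) ` DH = (\<lambda>x. ?c `` {x}) ` OP"
  proof
    show "(\<lambda>x. ?c `` {x}) ` OP \<subseteq> (\<lambda>x. ?c `` {x}) ` DH" using OP_sub by blast
    show "(\<lambda>x. ?c `` {x}) ` DH \<subseteq> (\<lambda>x. ?c `` {x}) ` OP"
    proof
      fix C assume "C \<in> (\<lambda>x. ?c `` {x}) ` DH"
      then obtain x where x: "x \<in> DH" "C = ?c `` {x}" by blast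
      obtain y where y: "y \<in> OP" "(x, y) \<in> ?c" using reach[OF x(1)] by blast
      have "C = ?c `` {y}" using conn_class[OF perm_sH perm_tH y(2) x(1)] x(2) by simp
      then show "C \<in> (\<lambda>x. ?c `` {x}) ` OP" using y(1) by blast
    qed
  qed
  moreover have "card ((\<lambda>x. ?c `` {x}) ` OP) \<le> card (orb fH ` OP)"
  proof (rule card_image_factor)
    show "finite OP" using finDH OP_sub finite_subset by blast
    show "\<forall>x\<in>OP. \<forall>y\<in>OP. orb fH x = orb fH y \<longrightarrow> ?c `` {x} = ?c `` {y}"
    proof (intro ballI impI)
      fix x y assume x: "x \<in> OP" and y: "y \<in> OP" and e: "orb fH x = orb fH y"
      have xD: "x \<in> DH" using x OP_sub by blast
      have "y \<in> orb fH x" using e orb_self[of y fH] by simp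
      then have "(x, y) \<in> ?c" using orb_comp_conn[OF perm_sH perm_tH xD] unfolding fH_def by blast
      then show "?c `` {x} = ?c `` {y}" by (rule conn_class[OF perm_sH perm_tH _ xD])
    qed
  qed
  ultimately show ?thesis unfolding ncomp_def by simp
qed

end

context pcover begin

lemma sum_orb_all: "perm_on f S \<Longrightarrow> real (ncyc f S) = (\<Sum>x\<in>S. 1 / real (card (orb f x)))"
  unfolding ncyc_def by (rule sum_orb[OF _ subset_refl perm_onD])

lemma inv_le: "0 < a \<Longrightarrow> a \<le> b \<Longrightarrow> 1 / real b \<le> 1 / real (a::nat)"
  by (simp add: frac_le)

theorem cover_False: False
proof -
  define n where "n = card V"
  define e where "e = card E"
  define F where "F = card (faces E rot)"
  define b where "b = card (orb fH ` OP)"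
  have gen: "ncyc sH DH + ncyc tH DH + ncyc fH DH \<le> card DH + 2 * ncomp sH tH DH"
    unfolding fH_def by (rule genus[OF perm_sH perm_tH])
  have cDH: "card DH = N * card D" by (simp add: card_cartesian_product)
  have s1: "real (ncyc sH DH) \<ge> real N * real n"
  proof -
    have "real (ncyc sH DH) = (\<Sum>x\<in>DH. 1 / real (card (orb sH x)))" by (rule sum_orb_all[OF perm_sH])
    also have "\<dots> \<ge> (\<Sum>x\<in>DH. 1 / real (card (orb (sg rot) (fst x))))"
    proof (rule sum_mono)
      fix x assume x: "x \<in> DH"
      show "1 / real (card (orb (sg rot) (fst x))) \<le> 1 / real (card (orb sH x))"
        by (rule inv_le[OF card_orb_pos[OF perm_sH x] orb_sH_le[OF x]])
    qed
    also have "(\<Sum>x\<in>DH. 1 / real (card (orb (sg rot) (fst x)))) =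
        real N * (\<Sum>d\<in>D. 1 / real (card (orb (sg rot) d)))"
      using sum_prod_fst[OF finD finP, of "\<lambda>d. 1 / real (card (orb (sg rot) d))"] by simp
    also have "(\<Sum>d\<in>D. 1 / real (card (orb (sg rot) d))) = real n"
      using sum_orb_all[OF perm_sg] ncyc_sg n_def by simp
    finally show ?thesis .
  qed
  have s2: "real (ncyc tH DH) \<ge> real N * real e"
  proof -
    have "real (ncyc tH DH) = (\<Sum>x\<in>DH. 1 / real (card (orb tH x)))" by (rule sum_orb_all[OF perm_tH])
    also have "\<dots> \<ge> (\<Sum>x\<in>DH. 1 / 2)"
    proof (rule sum_mono)
      fix x assume x: "x \<in> DH"
      show "1 / 2 \<le> 1 / real (card (orb tH x))"
        using inv_le[OF card_orb_pos[OF perm_tH x] orb_tH_le[OF x]] by simp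
    qed
    also have "(\<Sum>x\<in>DH. (1::real) / 2) = real (card DH) / 2" by simp
    also have "\<dots> = real N * real e" using cDH card_D_E e_def by simp
    finally show ?thesis .
  qed
  have s3: "real (ncyc fH DH) \<ge> real N * (real F - 1) + real b"
  proof -
    define I where "I = (D - outer) \<times> P"
    have dis1: "DH = I \<union> OP" unfolding I_def OP_def using outer_sub by blast
    have dis2: "I \<inter> OP = {}" unfolding I_def OP_def by blast
    note dis = dis1 dis2
    have fI: "finite I" unfolding I_def using finD by simp
    have fOP: "finite OP" unfolding OP_def using fin_outer by simp
    have t1: "real (ncyc fH DH) = (\<Sum>x\<in>DH. 1 / real (card (orb fH x)))" by (rule sum_orb_all[OF perm_fH])
    have t2: "(\<Sum>x\<in>DH. 1 / real (card (orb fH x))) = (\<Sum>x\<in>I. 1 / real (card (orb fH x))) + (\<Sum>x\<in>OP. 1 / real (card (orb fH x)))"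
      unfolding dis(1) by (rule sum.union_disjoint[OF fI fOP dis(2)])
    have t3: "(\<Sum>x\<in>OP. 1 / real (card (orb fH x))) = real b"
      unfolding b_def by (rule sum_orb[OF perm_fH OP_sub OP_inv, symmetric])
    have t4: "(\<Sum>x\<in>I. 1 / real (card (orb phi (fst x)))) \<le> (\<Sum>x\<in>I. 1 / real (card (orb fH x)))"
    proof (rule sum_mono)
      fix x assume x: "x \<in> I"
      have xD: "x \<in> DH" and no: "fst x \<notin> outer" using x unfolding I_def by (auto simp: mem_Times_iff)
      show "1 / real (card (orb phi (fst x))) \<le> 1 / real (card (orb fH x))"
        by (rule inv_le[OF card_orb_pos[OF perm_fH xD] orb_fH_int_le[OF xD no]])
    qed
    have t5: "(\<Sum>x\<in>I. 1 / real (card (orb phi (fst x)))) = real N * (\<Sum>d\<in>D - outer. 1 / real (card (orb phi d)))"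
      unfolding I_def using sum_prod_fst[of "D - outer" P "\<lambda>d. 1 / real (card (orb phi d))"] finD by simp
    have t6: "(\<Sum>d\<in>D - outer. 1 / real (card (orb phi d))) = real F - 1"
    proof -
      have u1: "real F = (\<Sum>d\<in>D. 1 / real (card (orb phi d)))" unfolding F_def by (rule card_faces_sum)
      have u2: "(\<Sum>d\<in>D. 1 / real (card (orb phi d))) = (\<Sum>d\<in>D - outer. 1 / real (card (orb phi d))) + (\<Sum>d\<in>outer. 1 / real (card (orb phi d)))"
        by (rule sum.subset_diff[OF outer_sub finD])
      have u3: "(\<Sum>d\<in>outer. 1 / real (card (orb phi d))) = (\<Sum>d\<in>outer. 1 / real (card outer))"
        by (rule sum.cong[OF refl]) (simp add: outer_orb_eq)
      have u4: "(\<Sum>d\<in>outer. 1 / real (card outer)) = 1" using ell_pos by simp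
      show ?thesis using u1 u2 u3 u4 by linarith
    qed
    have t7: "real N * (\<Sum>d\<in>D - outer. 1 / real (card (orb phi d))) = real N * (real F - 1)"
      using t6 by simp
    show ?thesis using t1 t2 t3 t4 t5 t7 by linarith
  qed
  have nc: "ncomp sH tH DH \<le> b" unfolding b_def by (rule ncomp_le_b)
  have blt: "b < N" unfolding b_def by (rule b_lt)
  have eu: "real n - real e + real F = 2" using euler unfolding n_def e_def F_def by linarith
  have eu2: "real N * real n - real N * real e + real N * real F = 2 * real N"
  proof -
    have "real N * (real n - real e + real F) = real N * 2" using eu by simp
    then show ?thesis by (simp add: algebra_simps)
  qed
  have g2: "real (ncyc sH DH) + real (ncyc tH DH) + real (ncyc fH DH) \<le> real N * (2 * real e) + 2 * real b"
  proof -
    have "real (ncyc sH DH + ncyc tH DH + ncyc fH DH) \<le> real (card DH + 2 * ncomp sH tH DH)"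
      using gen by linarith
    also have "\<dots> \<le> real (N * (2 * e) + 2 * b)" using cDH card_D_E e_def nc by simp
    finally show ?thesis by simp
  qed
  have "real N * real n + real N * real e + (real N * (real F - 1) + real b) \<le> real N * (2 * real e) + 2 * real b"
    using s1 s2 s3 g2 by linarith
  then have "real N \<le> real b" using eu2 by (simp add: algebra_simps)
  then show False using blt by simp
qed

end

context pgraph begin

lemma cover_use:
  fixes L N :: nat and sP tP :: "nat \<Rightarrow> nat"
  assumes "\<forall>f\<in>faces E rot - {outer}. card f = L" "L > 0"
    "perm_on sP {..<N}" "perm_on tP {..<N}"
    "\<forall>p<N. (sP ^^ k) p = p" "\<forall>p<N. tP (tP p) = p"
    "\<forall>p<N. ((sP \<circ> tP) ^^ L) p = p"
    "\<forall>r<L. \<exists>p<N. ((sP \<circ> tP) ^^ r) ((sP ^^ (k + 1 - k0)) (tP p)) \<noteq> p"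
  shows False
proof -
  have "pcover V E rot outer w k k0 L N sP tP"
    using pgraph_axioms assms unfolding pcover_def pcover_axioms_def by blast
  then show False by (rule pcover.cover_False)
qed

lemma face_ge3: assumes d: "d \<in> D" shows "card (orb phi d) \<ge> 3"
proof (rule ccontr)
  assume "\<not> 3 \<le> card (orb phi d)"
  then have c: "card (orb phi d) = 1 \<or> card (orb phi d) = 2" using card_orb_pos[OF perm_phi d] by linarith
  obtain u v where uv: "d = (u, v)" by (cases d)
  have uvE: "{u, v} \<in> E" using d uv dart_iff by simp
  have vV: "v \<in> V" and uv_ne: "u \<noteq> v" using edgeD[OF uvE] by auto
  have un: "u \<in> nbrs E v" using uvE nbrs_iff by (simp add: insert_commute)
  from c show False
  proof
    assume c1: "card (orb phi d) = 1"
    have "(phi ^^ 1) d = d" using orb_period[OF perm_phi d] c1 by simp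
    then have "phi d = d" by simp
    then show False using uv uv_ne unfolding face_succ_def by simp
  next
    assume c2: "card (orb phi d) = 2"
    have "(phi ^^ 2) d = d" using orb_period[OF perm_phi d] c2 by simp
    then have "phi (phi d) = d" by (simp add: numeral_2_eq_2)
    then have r: "rot v u = u" using uv unfolding face_succ_def by simp
    have "(rot v ^^ n) u = u" for n by (induction n) (auto simp: r)
    then have "nbrs E v = {u}" using rot_orbit[OF vV un] by auto
    then have "degree E v = 1" unfolding degree_def by simp
    then show False using deg_ge2[OF vV] by simp
  qed
qed

lemma face_count:
  assumes intL: "\<forall>f\<in>faces E rot - {outer}. card f = L" and Lpos: "L > 0"
  shows "real L * (real (card (faces E rot)) - 1) + real (card outer) = real (card D)"
proof -
  have u1: "real (card (faces E rot)) = (\<Sum>d\<in>D. 1 / real (card (orb phi d)))" by (rule card_faces_sum)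
  have u2: "(\<Sum>d\<in>D. 1 / real (card (orb phi d))) = (\<Sum>d\<in>D - outer. 1 / real (card (orb phi d))) + (\<Sum>d\<in>outer. 1 / real (card (orb phi d)))"
    by (rule sum.subset_diff[OF outer_sub finD])
  have u3: "(\<Sum>d\<in>outer. 1 / real (card (orb phi d))) = (\<Sum>d\<in>outer. 1 / real (card outer))"
    by (rule sum.cong[OF refl]) (simp add: outer_orb_eq)
  have u4: "(\<Sum>d\<in>outer. 1 / real (card outer)) = 1" using ell_pos by simp
  have u5: "(\<Sum>d\<in>D - outer. 1 / real (card (orb phi d))) = (\<Sum>d\<in>D - outer. 1 / real L)"
  proof (rule sum.cong[OF refl])
    fix d assume "d \<in> D - outer"
    then have "card (orb phi d) = L" using intL internal_face by blast
    then show "1 / real (card (orb phi d)) = 1 / real L" by simp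
  qed
  have u6: "(\<Sum>d\<in>D - outer. 1 / real L) = (real (card D) - real (card outer)) / real L"
    using card_Diff_subset[OF fin_outer outer_sub] card_mono[OF finD outer_sub] by (simp add: of_nat_diff)
  have "real (card (faces E rot)) - 1 = (real (card D) - real (card outer)) / real L"
    using u1 u2 u3 u4 u5 u6 by linarith
  then show ?thesis using Lpos by (simp add: field_simps)
qed

lemma main_False:
  assumes k: "k \<in> {3, 4, 5}" and intL: "\<forall>f\<in>faces E rot - {outer}. card f = L"
  shows False
proof -
  define n where "n = card V"
  define e where "e = card E"
  define F where "F = card (faces E rot)"
  define l where "l = card outer"
  have n1: "n \<ge> 1" using wV finV n_def by (metis One_nat_def Suc_leI card_gt_0_iff empty_iff)
  have eu: "int n - int e + int F = 2" using euler unfolding n_def e_def F_def .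
  have cD: "card D = k * (n - 1) + k0" using card_D_k n_def by simp
  have cE: "card D = 2 * e" using card_D_E e_def by simp
  have k3: "k \<ge> 3" using k by auto
  show False
  proof (cases "faces E rot - {outer} = {}")
    case True
    then have "faces E rot = {outer}" using outer_face by blast
    then have "F = 1" unfolding F_def by simp
    then have "e + 1 = n" using eu by linarith
    moreover have "k * (n - 1) \<ge> 3 * (n - 1)" using k3 by (simp add: mult_right_mono)
    ultimately show False using cD cE k0ge by linarith
  next
    case False
    then obtain f where f: "f \<in> faces E rot - {outer}" by blast
    then obtain d where d: "d \<in> D" "f = orb phi d" using faces_orb by auto
    have L: "card f = L" using intL f by blast
    have L3: "L \<ge> 3" using face_ge3[OF d(1)] d(2) L by simp
    have fc: "real L * (real F - 1) + real l = real (card D)"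
      using face_count[OF intL] L3 unfolding F_def l_def by simp
    have lpos: "l \<ge> 1" using ell_pos l_def by simp
    define X where "X = real F - 1"
    have fc2: "real L * X + real l = 2 * real e" using fc cE unfolding X_def by simp
    have eur: "real n - real e + real F = 2" using eu by linarith
    have cDr: "2 * real e = real k * (real n - 1) + real k0"
    proof -
      have "2 * e = k * (n - 1) + k0" using cD cE by simp
      then have "real (2 * e) = real (k * (n - 1) + k0)" by (simp only:)
      then show ?thesis using n1 by (simp add: of_nat_diff)
    qed
    have kk0: "k0 + 1 \<le> k" by (rule k0le)
    show False
    proof (cases "k = 3")
      case k3: True
      have X3: "3 * X = real e + real k0" using eur cDr k3 unfolding X_def by simp
      have "L \<le> 5"
      proof (rule ccontr)
        assume "\<not> L \<le> 5"
        then have "real L \<ge> 6" by simp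
        moreover have "X \<ge> 0" using X3 by simp
        ultimately have "real L * X \<ge> 6 * X" by (simp add: mult_right_mono)
        then show False using fc2 X3 lpos k0ge by linarith
      qed
      have k02: "k0 = 2" using k0ge kk0 k3 by simp
      have m: "k + 1 - k0 = 2" using k3 k02 by simp
      show False
      proof (cases "L = 3")
        case True
        show False using cover_use[OF intL, where N=4 and sP=s33 and tP=t33] s33_perm t33_perm s33_pow t33_inv f33_pow
            mono33_2 True k3 m by simp
      next
        case L3': False
        show False
        proof (cases "L = 4")
          case True
          show False using cover_use[OF intL, where N=3 and sP=s34 and tP=t34] s34_perm t34_perm s34_pow t34_inv f34_pow
              mono34_2 True k3 m by simp
        next
          case False
          then have "L = 5" using L3 L3' \<open>L \<le> 5\<close> by simp
          then show False using cover_use[OF intL, where N=5 and sP=s35 and tP=t35] s35_perm t35_perm s35_pow t35_inv f35_pow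
              mono35_2 k3 m by simp
        qed
      qed
    next
      case kn3: False
      show False
      proof (cases "k = 4")
        case k4: True
        have X4: "4 * X = 2 * real e + real k0" using eur cDr k4 unfolding X_def by simp
        have "L \<le> 3"
        proof (rule ccontr)
          assume "\<not> L \<le> 3"
          then have "real L \<ge> 4" by simp
          moreover have "X \<ge> 0" using X4 by simp
          ultimately have "real L * X \<ge> 4 * X" by (simp add: mult_right_mono)
          then show False using fc2 X4 lpos k0ge by linarith
        qed
        then have L3e: "L = 3" using L3 by simp
        have "k0 = 2 \<or> k0 = 3" using k0ge kk0 k4 by auto
        then show False
        proof
          assume "k0 = 2"
          then have m: "k + 1 - k0 = 3" using k4 by simp
          show False using cover_use[OF intL, where N=4 and sP=s43 and tP=t43] s43_perm t43_perm s43_pow t43_inv f43_pow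
              mono43_2 L3e k4 m by simp
        next
          assume "k0 = 3"
          then have m: "k + 1 - k0 = 2" using k4 by simp
          show False using cover_use[OF intL, where N=4 and sP=s43 and tP=t43] s43_perm t43_perm s43_pow t43_inv f43_pow
              mono43_3 L3e k4 m by simp
        qed
      next
        case False
        then have k5: "k = 5" using k kn3 by simp
        have X5: "5 * X = 3 * real e + real k0" using eur cDr k5 unfolding X_def by simp
        have "L \<le> 3"
        proof (rule ccontr)
          assume "\<not> L \<le> 3"
          then have "real L \<ge> 4" by simp
          moreover have "X \<ge> 0" using X5 by simp
          ultimately have "real L * X \<ge> 4 * X" by (simp add: mult_right_mono)
          then show False using fc2 X5 lpos k0ge by linarith
        qed
        then have L3e: "L = 3" using L3 by simp
        have "k0 = 2 \<or> k0 = 3 \<or> k0 = 4" using k0ge kk0 k5 by auto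
        then show False
        proof (elim disjE)
          assume "k0 = 2"
          then have m: "k + 1 - k0 = 4" using k5 by simp
          show False using cover_use[OF intL, where N=5 and sP=s53 and tP=t53] s53_perm t53_perm s53_pow t53_inv f53_pow
              mono53_2 L3e k5 m by simp
        next
          assume "k0 = 3"
          then have m: "k + 1 - k0 = 3" using k5 by simp
          show False using cover_use[OF intL, where N=5 and sP=s53 and tP=t53] s53_perm t53_perm s53_pow t53_inv f53_pow
              mono53_3 L3e k5 m by simp
        next
          assume "k0 = 4"
          then have m: "k + 1 - k0 = 2" using k5 by simp
          show False using cover_use[OF intL, where N=5 and sP=s53 and tP=t53] s53_perm t53_perm s53_pow t53_inv f53_pow
              mono53_4 L3e k5 m by simp
        qed
      qed
    qed
  qed
qed

end

theorem mainTheorem2: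
  fixes k k0 :: nat
  assumes "k \<in> {3, 4, 5}" and "2 \<le> k0" and "k0 \<le> k - 1"
  shows "\<not> (\<exists>(V :: 'v set) E rot outer w.
            plane_graph V E rot outer \<and> two_connected V E \<and>
            w \<in> V \<and> vertex_on_face w outer \<and> degree E w = k0 \<and>
            (\<forall>v\<in>V - {w}. degree E v = k) \<and>
            (\<exists>L. \<forall>f\<in>faces E rot - {outer}. face_length f = L))"
proof
  assume "\<exists>(V :: 'v set) E rot outer w.
            plane_graph V E rot outer \<and> two_connected V E \<and>
            w \<in> V \<and> vertex_on_face w outer \<and> degree E w = k0 \<and>
            (\<forall>v\<in>V - {w}. degree E v = k) \<and>
            (\<exists>L. \<forall>f\<in>faces E rot - {outer}. face_length f = L)"
  then show False
  proof (elim exE conjE)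
    fix V :: "'v set" and E rot outer w L
    assume H1: "plane_graph V E rot outer" and H2: "two_connected V E" and H3: "w \<in> V"
      and H4: "vertex_on_face w outer" and H5: "degree E w = k0"
      and H6: "\<forall>v\<in>V - {w}. degree E v = k"
      and H7: "\<forall>f\<in>faces E rot - {outer}. face_length f = L"
    have kk: "k0 + 1 \<le> k" using assms by auto
    have pg: "pgraph V E rot outer w k k0"
      unfolding pgraph_def using H1 H2 H3 H4 H5 H6 assms(2) kk by (intro conjI)
    have H7': "\<forall>f\<in>faces E rot - {outer}. card f = L" using H7 unfolding face_length_def .
    show False by (rule pgraph.main_False[OF pg assms(1) H7'])
  qed
qed

end
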